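(* Let $n,k,j$ be positive integers with $n>2k$, let $(S^n,g_0)$ be the round unit sphere in $\mathbb{R}^{n+1}$, and let $L$ be a formally self-adjoint $j$-differential operator on $S^n$ (see context). Set $p:=\frac{n(j+1)}{n-2k}$, $\mathcal V:=\{u\in C^\infty(S^n):\int_{S^n}|u|^p\,d\mathrm{vol}_{g_0}=\omega_n\}$ and $\mathcal E_L(u):=\int_{S^n}u\,L(u,\dots,u)\,d\mathrm{vol}_{g_0}$. Suppose $u\in\mathcal V$ is positive and is a local minimizer of $\mathcal E_L\colon\mathcal V\to\mathbb{R}$, and suppose \[ \int_{S^n}x^iu^{p}\,d\mathrm{vol}_{g_0}=0\qquad\text{for all }0\le i\le n, \] where $x^0,\dots,x^n$ are the restrictions of the coordinate functions of $\mathbb{R}^{n+1}$. Then \[ \sum_{i=0}^n\int_{S^n}x^iu\,\bigl(L(x^iu,u,\dots,u)-x^iL(u,u,\dots,u)\bigr)\,d\mathrm{vol}_{g_0} \ge \frac{2(j+1)k}{j(n-2k)}\,\mathcal E_L(u). \]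
   Context: $\omega_n$ is the volume of the round unit $S^n$. A formally self-adjoint $j$-differential operator is a map $L\colon(C^\infty(S^n))^j\to C^\infty(S^n)$ that is multilinear over $\mathbb{R}$, is a differential operator in each argument, and such that $(u_0,\dots,u_j)\mapsto\int_{S^n}u_0\,L(u_1,\dots,u_j)\,d\mathrm{vol}_{g_0}$ is symmetric in $(u_0,\dots,u_j)$. "Local minimizer" means $\mathcal E_L(v)\ge\mathcal E_L(u)$ for all $v\in\mathcal V$ in a $C^\infty$-neighborhood of $u$. *)

theory Defs
  imports "HOL-Analysis.Analysis" "HOL-Library.Multiset"
begin

text \<open>The round unit sphere S^n is sphere 0 1 in real^'n, with n + 1 = CARD('n).
  A function on S^n is represented by a function real^'n => real vanishing off the sphere.\<close>

definition radial_ext :: "(real^'n \<Rightarrow> real) \<Rightarrow> real^'n \<Rightarrow> real" where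
  "radial_ext u x = u (x /\<^sub>R norm x)"

fun iter_pd :: "'n list \<Rightarrow> (real^'n \<Rightarrow> real) \<Rightarrow> real^'n \<Rightarrow> real" where
  "iter_pd [] f = f"
| "iter_pd (i # is) f = (\<lambda>x. frechet_derivative (iter_pd is f) (at x) (axis i 1))"

definition C_inf_on :: "(real^'n) set \<Rightarrow> (real^'n \<Rightarrow> real) \<Rightarrow> bool" where
  "C_inf_on S f \<longleftrightarrow> (\<forall>is. \<forall>x\<in>S. iter_pd is f differentiable (at x))"

text \<open>C^infinity(S^n): u is smooth iff its degree-0 homogeneous extension is smooth on R^(n+1) - 0.\<close>
definition smooth_sphere :: "(real^'n \<Rightarrow> real) set" where
  "smooth_sphere = {u. (\<forall>x. x \<notin> sphere 0 1 \<longrightarrow> u x = 0) \<and> C_inf_on (UNIV - {0}) (radial_ext u)}"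

text \<open>Integral over S^n w.r.t. the round volume, via the cone formula
  int_{S^n} f = (n+1) int_{B^{n+1}} f(x/|x|) dx.\<close>
definition sphere_int :: "(real^'n \<Rightarrow> real) \<Rightarrow> real" where
  "sphere_int f = real CARD('n) * (LINT x|lborel. indicator (ball 0 1) x * f (x /\<^sub>R norm x))"

definition omega :: "'n::finite itself \<Rightarrow> real" where
  "omega _ = sphere_int (\<lambda>x::real^'n. 1)"

text \<open>Differential operators (Grothendieck's algebraic definition, order <= m).\<close>
primrec diffop_order :: "nat \<Rightarrow> ((real^'n \<Rightarrow> real) \<Rightarrow> (real^'n \<Rightarrow> real)) \<Rightarrow> bool" where
  "diffop_order 0 D = (\<forall>f\<in>smooth_sphere. \<forall>u\<in>smooth_sphere.
      D (\<lambda>x. f x * u x) = (\<lambda>x. f x * D u x))"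
| "diffop_order (Suc m) D = (\<forall>f\<in>smooth_sphere.
      diffop_order m (\<lambda>u x. D (\<lambda>y. f y * u y) x - f x * D u x))"

definition is_diffop :: "((real^'n \<Rightarrow> real) \<Rightarrow> (real^'n \<Rightarrow> real)) \<Rightarrow> bool" where
  "is_diffop D \<longleftrightarrow> (\<forall>u\<in>smooth_sphere. D u \<in> smooth_sphere) \<and> (\<exists>m. diffop_order m D)"

definition j_diffop :: "nat \<Rightarrow> ((real^'n \<Rightarrow> real) list \<Rightarrow> (real^'n \<Rightarrow> real)) \<Rightarrow> bool" where
  "j_diffop j L \<longleftrightarrow>
     (\<forall>us. length us = j \<and> set us \<subseteq> smooth_sphere \<longrightarrow> L us \<in> smooth_sphere) \<and>
     (\<forall>us i v w a b. length us = j \<and> set us \<subseteq> smooth_sphere \<and> i < j \<and>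
         v \<in> smooth_sphere \<and> w \<in> smooth_sphere \<longrightarrow>
         L (us[i := (\<lambda>x. a * v x + b * w x)]) = (\<lambda>x. a * L (us[i := v]) x + b * L (us[i := w]) x)) \<and>
     (\<forall>us i. length us = j \<and> set us \<subseteq> smooth_sphere \<and> i < j \<longrightarrow>
         is_diffop (\<lambda>v. L (us[i := v])))"

definition sa_form :: "((real^'n \<Rightarrow> real) list \<Rightarrow> (real^'n \<Rightarrow> real)) \<Rightarrow> (real^'n \<Rightarrow> real) list \<Rightarrow> real" where
  "sa_form L us = sphere_int (\<lambda>x. hd us x * L (tl us) x)"

definition formally_self_adjoint :: "nat \<Rightarrow> ((real^'n \<Rightarrow> real) list \<Rightarrow> (real^'n \<Rightarrow> real)) \<Rightarrow> bool" where
  "formally_self_adjoint j L \<longleftrightarrow> j_diffop j L \<and>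
     (\<forall>us vs. length us = j + 1 \<and> set us \<subseteq> smooth_sphere \<and> mset vs = mset us \<longrightarrow>
        sa_form L vs = sa_form L us)"

definition energy :: "nat \<Rightarrow> ((real^'n \<Rightarrow> real) list \<Rightarrow> (real^'n \<Rightarrow> real)) \<Rightarrow> (real^'n \<Rightarrow> real) \<Rightarrow> real" where
  "energy j L u = sphere_int (\<lambda>x. u x * L (replicate j u) x)"

definition constraint_set :: "real \<Rightarrow> (real^'n \<Rightarrow> real) set" where
  "constraint_set p = {u \<in> smooth_sphere. sphere_int (\<lambda>x. \<bar>u x\<bar> powr p) = omega TYPE('n)}"

text \<open>Basic C^m-neighbourhoods (C^infinity topology).\<close>
definition cm_close :: "nat \<Rightarrow> real \<Rightarrow> (real^'n \<Rightarrow> real) \<Rightarrow> (real^'n \<Rightarrow> real) \<Rightarrow> bool" where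
  "cm_close m \<epsilon> u v \<longleftrightarrow> (\<forall>is. length is \<le> m \<longrightarrow>
      (\<forall>x\<in>sphere 0 1. \<bar>iter_pd is (radial_ext (\<lambda>y. v y - u y)) x\<bar> < \<epsilon>))"

definition local_minimizer :: "((real^'n \<Rightarrow> real) \<Rightarrow> real) \<Rightarrow> (real^'n \<Rightarrow> real) set \<Rightarrow> (real^'n \<Rightarrow> real) \<Rightarrow> bool" where
  "local_minimizer E V u \<longleftrightarrow> u \<in> V \<and>
     (\<exists>m \<epsilon>. \<epsilon> > 0 \<and> (\<forall>v\<in>V. cm_close m \<epsilon> u v \<longrightarrow> E v \<ge> E u))"

end

theory Submission
  imports Defs
begin


lemma normalize_cases: "(x::real^'n) /\<^sub>R norm x \<in> sphere 0 1 \<or> x /\<^sub>R norm x = 0"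
  by (cases "x = 0") (auto simp: norm_sgn sgn_div_norm[symmetric])

lemma sint_cong:
  assumes "\<forall>x\<in>sphere 0 1. f x = g x" "f 0 = g 0"
  shows "sphere_int f = sphere_int (g :: real^'n \<Rightarrow> real)"
proof -
  have "\<And>x::real^'n. f (x /\<^sub>R norm x) = g (x /\<^sub>R norm x)"
    using normalize_cases assms by metis
  then show ?thesis unfolding sphere_int_def by simp
qed

lemma sint_integrable:
  fixes f :: "real^'n \<Rightarrow> real"
  assumes "continuous_on (sphere 0 1) f"
  shows "integrable lborel (\<lambda>x. indicator (ball 0 1) x * f (x /\<^sub>R norm x))"
proof -
  obtain B where B0: "\<forall>z\<in>f ` sphere 0 1. norm z \<le> B"
    using compact_imp_bounded[OF compact_continuous_image[OF assms compact_sphere]]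
    unfolding bounded_iff by blast
  have B: "\<And>y. y \<in> sphere 0 1 \<Longrightarrow> norm (f y) \<le> B" using B0 by blast
  have c: "continuous_on (-{0}) (\<lambda>x::real^'n. f (x /\<^sub>R norm x))"
  proof (rule continuous_on_compose2[OF assms])
    show "continuous_on (-{0}) (\<lambda>x::real^'n. x /\<^sub>R norm x)"
      by (intro continuous_intros) auto
    show "(\<lambda>x::real^'n. x /\<^sub>R norm x) ` (-{0}) \<subseteq> sphere 0 1" by (auto simp: norm_sgn sgn_div_norm[symmetric] split: if_splits)
  qed
  have eq: "(\<lambda>x::real^'n. f (x /\<^sub>R norm x)) =
     (\<lambda>x. indicator (-{0}) x *\<^sub>R f (x /\<^sub>R norm x) + indicator {0} x * f 0)"
    by (auto simp: indicator_def)
  have m: "(\<lambda>x::real^'n. f (x /\<^sub>R norm x)) \<in> borel_measurable lborel"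
  proof -
    have mc: "(\<lambda>x::real^'n. indicator (-{0}) x *\<^sub>R f (x /\<^sub>R norm x)) \<in> borel_measurable borel"
      by (rule borel_measurable_continuous_on_indicator[OF _ c]) auto
    show ?thesis unfolding eq
      by (intro borel_measurable_add borel_measurable_times borel_measurable_indicator)
        (use mc in auto)
  qed
  have "integrable lborel (\<lambda>x. indicator (ball 0 1) x *\<^sub>R f (x /\<^sub>R norm x))"
  proof (rule integrableI_bounded_set_indicator[where B="max B \<bar>f 0\<bar>"])
    show "emeasure lborel (ball (0::real^'n) 1) < \<infinity>"
      by (rule emeasure_bounded_finite) simp
    show "AE x in lborel. x \<in> ball 0 1 \<longrightarrow> norm (f (x /\<^sub>R norm x)) \<le> max B \<bar>f 0\<bar>"
    proof (rule AE_I2, safe)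
      fix x :: "real^'n"
      show "norm (f (x /\<^sub>R norm x)) \<le> max B \<bar>f 0\<bar>"
        using normalize_cases[of x] B[of "x /\<^sub>R norm x"] by auto
    qed
  qed (use m in auto)
  then show ?thesis by simp
qed

lemma sint_add:
  fixes f g :: "real^'n \<Rightarrow> real"
  assumes "continuous_on (sphere 0 1) f" "continuous_on (sphere 0 1) g"
  shows "sphere_int (\<lambda>x. f x + g x) = sphere_int f + sphere_int g"
proof -
  have "(LINT x|lborel. indicator (ball 0 1) x * (f (x /\<^sub>R norm x) + g (x /\<^sub>R norm x))) =
     (LINT x|lborel. indicator (ball 0 1) x * f (x /\<^sub>R norm x) + indicator (ball 0 1) x * g (x /\<^sub>R norm x))"
    by (simp add: distrib_left)
  also have "\<dots> = (LINT x|lborel. indicator (ball 0 1) x * f (x /\<^sub>R norm x)) + (LINT x|lborel. indicator (ball 0 1) x * g (x /\<^sub>R norm x))"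
    by (rule Bochner_Integration.integral_add[OF sint_integrable[OF assms(1)] sint_integrable[OF assms(2)]])
  finally show ?thesis unfolding sphere_int_def by (simp add: distrib_left)
qed

lemma sint_diff:
  fixes f g :: "real^'n \<Rightarrow> real"
  assumes "continuous_on (sphere 0 1) f" "continuous_on (sphere 0 1) g"
  shows "sphere_int (\<lambda>x. f x - g x) = sphere_int f - sphere_int g"
proof -
  have "(LINT x|lborel. indicator (ball 0 1) x * (f (x /\<^sub>R norm x) - g (x /\<^sub>R norm x))) =
     (LINT x|lborel. indicator (ball 0 1) x * f (x /\<^sub>R norm x) - indicator (ball 0 1) x * g (x /\<^sub>R norm x))"
    by (simp add: right_diff_distrib)
  also have "\<dots> = (LINT x|lborel. indicator (ball 0 1) x * f (x /\<^sub>R norm x)) - (LINT x|lborel. indicator (ball 0 1) x * g (x /\<^sub>R norm x))"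
    by (rule Bochner_Integration.integral_diff[OF sint_integrable[OF assms(1)] sint_integrable[OF assms(2)]])
  finally show ?thesis unfolding sphere_int_def by (simp add: right_diff_distrib)
qed

lemma sint_cmult:
  "sphere_int (\<lambda>x. c * f x) = c * sphere_int (f :: real^'n \<Rightarrow> real)"
  unfolding sphere_int_def by (simp add: mult.left_commute)

lemma sint_sum:
  fixes f :: "'i \<Rightarrow> real^'n \<Rightarrow> real"
  assumes "finite I" "\<And>i. i \<in> I \<Longrightarrow> continuous_on (sphere 0 1) (f i)"
  shows "sphere_int (\<lambda>x. \<Sum>i\<in>I. f i x) = (\<Sum>i\<in>I. sphere_int (f i))"
  using assms
proof (induction I rule: finite_induct)
  case empty
  then show ?case unfolding sphere_int_def by simp
next
  case (insert a I)
  have "sphere_int (\<lambda>x. \<Sum>i\<in>insert a I. f i x) = sphere_int (\<lambda>x. f a x + (\<Sum>i\<in>I. f i x))"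
    using insert by simp
  also have "\<dots> = sphere_int (f a) + sphere_int (\<lambda>x. \<Sum>i\<in>I. f i x)"
    by (rule sint_add) (use insert in \<open>auto intro!: continuous_on_sum\<close>)
  finally show ?case using insert by simp
qed

lemma sint_abs_le:
  fixes f g :: "real^'n \<Rightarrow> real"
  assumes "continuous_on (sphere 0 1) f" "continuous_on (sphere 0 1) g"
    and "\<And>x. x \<in> sphere 0 1 \<Longrightarrow> \<bar>f x\<bar> \<le> g x" "\<bar>f 0\<bar> \<le> g 0"
  shows "\<bar>sphere_int f\<bar> \<le> sphere_int g"
proof -
  have le: "\<And>x::real^'n. \<bar>f (x /\<^sub>R norm x)\<bar> \<le> g (x /\<^sub>R norm x)"
    using normalize_cases assms(3,4) by metis
  have "\<bar>LINT x|lborel. indicator (ball 0 1) x * f (x /\<^sub>R norm x)\<bar>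
     \<le> (LINT x|lborel. indicator (ball 0 1) x * g (x /\<^sub>R norm x))"
  proof (rule integral_abs_bound_integral[OF sint_integrable[OF assms(1)] sint_integrable[OF assms(2)]])
    fix x :: "real^'n"
    show "\<bar>indicator (ball 0 1) x * f (x /\<^sub>R norm x)\<bar> \<le> indicator (ball 0 1) x * g (x /\<^sub>R norm x)"
      using le[of x] by (auto simp: indicator_def)
  qed
  then show ?thesis unfolding sphere_int_def by (simp add: abs_mult)
qed

lemma omega_pos: "omega TYPE('n::finite) > 0"
proof -
  have "(LINT x|lborel. indicator (ball (0::real^'n) 1) x * 1) = measure lborel (ball (0::real^'n) 1)"
    by simp
  moreover have "measure lborel (ball (0::real^'n) 1) > 0"
    using content_ball_pos[of "1::real" "0::real^'n"] by simp
  ultimately show ?thesis unfolding omega_def sphere_int_def by simp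
qed


lemma open_punct: "open (-{0::real^'n})" by (simp add: open_Compl)

lemma exI_alg: "g \<in> A \<Longrightarrow> \<forall>x. P x \<longrightarrow> F x = g x \<Longrightarrow> \<exists>g\<in>A. \<forall>x. P x \<longrightarrow> F x = g x"
  by blast

lemma fd_cong:
  assumes "open S" "x \<in> S" "\<And>y. y \<in> S \<Longrightarrow> f y = g y"
  shows "frechet_derivative f (at x) = frechet_derivative g (at x)"
proof -
  have "\<And>D. (f has_derivative D) (at x) \<longleftrightarrow> (g has_derivative D) (at x)"
    using has_derivative_transform_within_open[OF _ assms(1,2), of f _ UNIV g]
      has_derivative_transform_within_open[OF _ assms(1,2), of g _ UNIV f] assms(3)
    by metis
  then show ?thesis unfolding frechet_derivative_def by simp
qed

lemma diff_cong:
  assumes "open S" "x \<in> S" "\<And>y. y \<in> S \<Longrightarrow> f y = g y" "g differentiable (at x)"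
  shows "f differentiable (at x)"
  using assms has_derivative_transform_within_open[OF _ assms(1,2), of g _ UNIV f]
  unfolding differentiable_def by metis

lemma iter_pd_cong:
  assumes "open S" "\<And>y. y \<in> S \<Longrightarrow> f y = g y" "x \<in> S"
  shows "iter_pd is f x = iter_pd is g x"
  using assms(3)
proof (induction "is" arbitrary: x)
  case Nil
  then show ?case using assms(2) by simp
next
  case (Cons i "is")
  have "frechet_derivative (iter_pd is f) (at x) = frechet_derivative (iter_pd is g) (at x)"
    by (rule fd_cong[OF assms(1) Cons.prems]) (use Cons.IH in auto)
  then show ?case by simp
qed

inductive_set alg :: "(real^'n \<Rightarrow> real) \<Rightarrow> (real^'n \<Rightarrow> real) set" for h where
  base: "iter_pd is h \<in> alg h"
| const: "(\<lambda>x. c) \<in> alg h"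
| coord: "(\<lambda>x. x $ k) \<in> alg h"
| inv: "(\<lambda>x. 1 / norm x) \<in> alg h"
| add: "f \<in> alg h \<Longrightarrow> g \<in> alg h \<Longrightarrow> (\<lambda>x. f x + g x) \<in> alg h"
| mult: "f \<in> alg h \<Longrightarrow> g \<in> alg h \<Longrightarrow> (\<lambda>x. f x * g x) \<in> alg h"

lemma inv_norm_deriv:
  assumes "(x::real^'n) \<noteq> 0"
  shows "((\<lambda>x. 1 / norm x) has_derivative (\<lambda>v. - (x \<bullet> v) / norm x ^ 3)) (at x)"
proof -
  have n: "((\<lambda>x. norm x) has_derivative (\<lambda>v. v \<bullet> sgn x)) (at x)"
    using has_derivative_norm[OF assms] by simp
  have d: "((\<lambda>x. 1 / norm x) has_derivative (\<lambda>h. - 1 * (inverse (norm x) * (h \<bullet> sgn x) * inverse (norm x)) + 0 / norm x)) (at x)"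
    using has_derivative_divide[OF has_derivative_const n, of 1] assms by simp
  show ?thesis
    by (rule has_derivative_eq_rhs[OF d]) (use assms in \<open>auto simp: fun_eq_iff sgn_div_norm field_simps power3_eq_cube inner_commute\<close>)
qed

lemma alg_props:
  fixes h :: "real^'n \<Rightarrow> real"
  assumes C: "C_inf_on (-{0}) h"
  assumes "f \<in> alg h"
  shows "(\<forall>x. x \<noteq> 0 \<longrightarrow> f differentiable (at x)) \<and>
         (\<forall>i. \<exists>g\<in>alg h. \<forall>x. x \<noteq> 0 \<longrightarrow> frechet_derivative f (at x) (axis i 1) = g x)"
  using assms(2)
proof (induction rule: alg.induct)
  case (base "is")
  show ?case
  proof
    show "\<forall>x. x \<noteq> 0 \<longrightarrow> iter_pd is h differentiable at x"
      using C unfolding C_inf_on_def by auto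
    show "\<forall>i. \<exists>g\<in>alg h. \<forall>x. x \<noteq> 0 \<longrightarrow> frechet_derivative (iter_pd is h) (at x) (axis i 1) = g x"
      using alg.base[of "i # is" h for i] by fastforce
  qed
next
  case (const c)
  have "\<And>x. frechet_derivative (\<lambda>x::real^'n. c) (at x) = (\<lambda>v. 0)"
    using frechet_derivative_at[OF has_derivative_const] by metis
  then show ?case using alg.const[of 0 h] by auto
next
  case (coord k)
  have d: "\<And>x. ((\<lambda>x::real^'n. x $ k) has_derivative (\<lambda>v. v $ k)) (at x)"
    by (rule bounded_linear_imp_has_derivative) (rule bounded_linear_vec_nth)
  show ?case
  proof
    show "\<forall>x. x \<noteq> 0 \<longrightarrow> (\<lambda>x::real^'n. x $ k) differentiable at x"
      using d by (auto intro: differentiableI)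
    show "\<forall>i. \<exists>g\<in>alg h. \<forall>x. x \<noteq> 0 \<longrightarrow> frechet_derivative (\<lambda>x::real^'n. x $ k) (at x) (axis i 1) = g x"
    proof
      fix i
      show "\<exists>g\<in>alg h. \<forall>x. x \<noteq> 0 \<longrightarrow> frechet_derivative (\<lambda>x::real^'n. x $ k) (at x) (axis i 1) = g x"
      proof
        show "(\<lambda>x. axis i (1::real) $ k) \<in> alg h" by (rule alg.const)
        have "\<And>x. frechet_derivative (\<lambda>x::real^'n. x $ k) (at x) = (\<lambda>v. v $ k)"
          by (rule frechet_derivative_at[OF d, symmetric])
        then show "\<forall>x. x \<noteq> 0 \<longrightarrow> frechet_derivative (\<lambda>x::real^'n. x $ k) (at x) (axis i 1) = axis i 1 $ k"
          by simp
      qed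
    qed
  qed
next
  case inv
  show ?case
  proof
    show "\<forall>x. x \<noteq> 0 \<longrightarrow> (\<lambda>x::real^'n. 1 / norm x) differentiable at x"
      using inv_norm_deriv unfolding differentiable_def by blast
    show "\<forall>i. \<exists>g\<in>alg h. \<forall>x. x \<noteq> 0 \<longrightarrow> frechet_derivative (\<lambda>x::real^'n. 1 / norm x) (at x) (axis i 1) = g x"
    proof
      fix i
      let ?g = "\<lambda>x::real^'n. (-1) * (x $ i * ((1 / norm x) * ((1 / norm x) * (1 / norm x))))"
      have "?g \<in> alg h"
        by (intro alg.mult alg.const alg.coord alg.inv)
      moreover have "\<forall>x. x \<noteq> 0 \<longrightarrow> frechet_derivative (\<lambda>x::real^'n. 1 / norm x) (at x) (axis i 1) = ?g x"
      proof (intro allI impI)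
        fix x :: "real^'n" assume "x \<noteq> 0"
        have "frechet_derivative (\<lambda>x::real^'n. 1 / norm x) (at x) = (\<lambda>v. - (x \<bullet> v) / norm x ^ 3)"
          using frechet_derivative_at[OF inv_norm_deriv[OF \<open>x \<noteq> 0\<close>]] by simp
        then show "frechet_derivative (\<lambda>x::real^'n. 1 / norm x) (at x) (axis i 1) = ?g x"
          by (simp add: inner_axis power3_eq_cube)
      qed
      ultimately show "\<exists>g\<in>alg h. \<forall>x. x \<noteq> 0 \<longrightarrow> frechet_derivative (\<lambda>x::real^'n. 1 / norm x) (at x) (axis i 1) = g x"
        by (rule exI_alg)
    qed
  qed
next
  case (add f g)
  show ?case
  proof
    show "\<forall>x. x \<noteq> 0 \<longrightarrow> (\<lambda>x. f x + g x) differentiable at x"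
      using add.IH differentiable_add by blast
    show "\<forall>i. \<exists>k\<in>alg h. \<forall>x. x \<noteq> 0 \<longrightarrow> frechet_derivative (\<lambda>x. f x + g x) (at x) (axis i 1) = k x"
    proof
      fix i
      obtain f' where f': "f' \<in> alg h" "\<forall>x. x \<noteq> 0 \<longrightarrow> frechet_derivative f (at x) (axis i 1) = f' x"
        using add.IH by blast
      obtain g' where g': "g' \<in> alg h" "\<forall>x. x \<noteq> 0 \<longrightarrow> frechet_derivative g (at x) (axis i 1) = g' x"
        using add.IH by blast
      have "\<forall>x. x \<noteq> 0 \<longrightarrow> frechet_derivative (\<lambda>x. f x + g x) (at x) (axis i 1) = f' x + g' x"
      proof (intro allI impI)
        fix x :: "real^'n" assume x: "x \<noteq> 0"
        have df: "(f has_derivative frechet_derivative f (at x)) (at x)"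
          using add.IH x frechet_derivative_works by blast
        have dg: "(g has_derivative frechet_derivative g (at x)) (at x)"
          using add.IH x frechet_derivative_works by blast
        have "frechet_derivative (\<lambda>x. f x + g x) (at x) = (\<lambda>v. frechet_derivative f (at x) v + frechet_derivative g (at x) v)"
          by (rule frechet_derivative_at[OF has_derivative_add[OF df dg], symmetric])
        then show "frechet_derivative (\<lambda>x. f x + g x) (at x) (axis i 1) = f' x + g' x"
          using f' g' x by simp
      qed
      then show "\<exists>k\<in>alg h. \<forall>x. x \<noteq> 0 \<longrightarrow> frechet_derivative (\<lambda>x. f x + g x) (at x) (axis i 1) = k x"
        by (rule exI_alg[OF alg.add[OF f'(1) g'(1)]])
    qed
  qed
next
  case (mult f g)
  show ?case
  proof
    show "\<forall>x. x \<noteq> 0 \<longrightarrow> (\<lambda>x. f x * g x) differentiable at x"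
      using mult.IH differentiable_mult by blast
    show "\<forall>i. \<exists>k\<in>alg h. \<forall>x. x \<noteq> 0 \<longrightarrow> frechet_derivative (\<lambda>x. f x * g x) (at x) (axis i 1) = k x"
    proof
      fix i
      obtain f' where f': "f' \<in> alg h" "\<forall>x. x \<noteq> 0 \<longrightarrow> frechet_derivative f (at x) (axis i 1) = f' x"
        using mult.IH by blast
      obtain g' where g': "g' \<in> alg h" "\<forall>x. x \<noteq> 0 \<longrightarrow> frechet_derivative g (at x) (axis i 1) = g' x"
        using mult.IH by blast
      have "\<forall>x. x \<noteq> 0 \<longrightarrow> frechet_derivative (\<lambda>x. f x * g x) (at x) (axis i 1) = f x * g' x + f' x * g x"
      proof (intro allI impI)
        fix x :: "real^'n" assume x: "x \<noteq> 0"
        have df: "(f has_derivative frechet_derivative f (at x)) (at x)"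
          using mult.IH x frechet_derivative_works by blast
        have dg: "(g has_derivative frechet_derivative g (at x)) (at x)"
          using mult.IH x frechet_derivative_works by blast
        have "frechet_derivative (\<lambda>x. f x * g x) (at x) = (\<lambda>v. f x * frechet_derivative g (at x) v + frechet_derivative f (at x) v * g x)"
          by (rule frechet_derivative_at[OF has_derivative_mult[OF df dg], symmetric])
        then show "frechet_derivative (\<lambda>x. f x * g x) (at x) (axis i 1) = f x * g' x + f' x * g x"
          using f' g' x by simp
      qed
      then show "\<exists>k\<in>alg h. \<forall>x. x \<noteq> 0 \<longrightarrow> frechet_derivative (\<lambda>x. f x * g x) (at x) (axis i 1) = k x"
        by (rule exI_alg[OF alg.add[OF alg.mult[OF mult.hyps(1) g'(1)] alg.mult[OF f'(1) mult.hyps(2)]]])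
    qed
  qed
qed

lemma alg_iter:
  fixes h :: "real^'n \<Rightarrow> real"
  assumes C: "C_inf_on (-{0}) h" and f: "f \<in> alg h"
  shows "\<exists>g\<in>alg h. \<forall>x. x \<noteq> 0 \<longrightarrow> iter_pd is f x = g x"
proof (induction "is")
  case Nil
  then show ?case using f by auto
next
  case (Cons i "is")
  then obtain g where g: "g \<in> alg h" "\<forall>x. x \<noteq> 0 \<longrightarrow> iter_pd is f x = g x" by blast
  obtain g' where g': "g' \<in> alg h" "\<forall>x. x \<noteq> 0 \<longrightarrow> frechet_derivative g (at x) (axis i 1) = g' x"
    using alg_props[OF C g(1)] by blast
  have "\<forall>x. x \<noteq> 0 \<longrightarrow> iter_pd (i # is) f x = g' x"
  proof (intro allI impI)
    fix x :: "real^'n" assume x: "x \<noteq> 0"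
    have "frechet_derivative (iter_pd is f) (at x) = frechet_derivative g (at x)"
      by (rule fd_cong[of "-{0}"]) (use g x in auto)
    then show "iter_pd (i # is) f x = g' x" using g' x by simp
  qed
  then show ?case using g' by blast
qed

lemma alg_Cinf:
  fixes h :: "real^'n \<Rightarrow> real"
  assumes C: "C_inf_on (-{0}) h" and g: "g \<in> alg h" and fg: "\<And>x. x \<noteq> 0 \<Longrightarrow> f x = g x"
  shows "C_inf_on (-{0}) f"
  unfolding C_inf_on_def
proof (intro allI ballI)
  fix "is" and x :: "real^'n" assume x: "x \<in> -{0}"
  obtain k where k: "k \<in> alg h" "\<forall>x. x \<noteq> 0 \<longrightarrow> iter_pd is g x = k x" using alg_iter[OF C g] by blast
  have "\<forall>y. y \<noteq> 0 \<longrightarrow> iter_pd is f y = k y"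
    using iter_pd_cong[OF open_punct, of f g] fg k by auto
  then show "iter_pd is f differentiable at x"
    using diff_cong[OF open_punct, of x "iter_pd is f" k] alg_props[OF C k(1)] x by auto
qed

lemma smooth_cont:
  fixes f :: "real^'n \<Rightarrow> real"
  assumes "f \<in> smooth_sphere"
  shows "continuous_on (sphere 0 1) f"
proof -
  have *: "\<And>x. x \<noteq> 0 \<Longrightarrow> radial_ext f differentiable at x"
  proof -
    fix x :: "real^'n" assume "x \<noteq> 0"
    then have "iter_pd [] (radial_ext f) differentiable at x"
      using assms unfolding smooth_sphere_def C_inf_on_def by blast
    then show "radial_ext f differentiable at x" by simp
  qed
  then have "continuous_on (sphere 0 1) (radial_ext f)"
  proof (intro continuous_at_imp_continuous_on ballI differentiable_imp_continuous_within)
    fix x :: "real^'n" assume "x \<in> sphere 0 1"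
    then have "x \<noteq> 0" by auto
    then show "radial_ext f differentiable at x" using * by blast
  qed
  moreover have "\<And>x. x \<in> sphere 0 1 \<Longrightarrow> radial_ext f x = f x"
    by (simp add: radial_ext_def)
  ultimately show ?thesis using continuous_on_eq by metis
qed


lemma iter_pd_lin:
  fixes f g :: "real^'n \<Rightarrow> real"
  assumes f: "C_inf_on (-{0}) f" and g: "C_inf_on (-{0}) g"
  shows "x \<noteq> 0 \<Longrightarrow> iter_pd is (\<lambda>y. a * f y + b * g y) x = a * iter_pd is f x + b * iter_pd is g x"
proof (induction "is" arbitrary: x)
  case Nil
  then show ?case by simp
next
  case (Cons i "is")
  have "frechet_derivative (iter_pd is (\<lambda>y. a * f y + b * g y)) (at x)
      = frechet_derivative (\<lambda>y. a * iter_pd is f y + b * iter_pd is g y) (at x)"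
    by (rule fd_cong[OF open_punct]) (use Cons in auto)
  also have "\<dots> = (\<lambda>v. a * frechet_derivative (iter_pd is f) (at x) v + b * frechet_derivative (iter_pd is g) (at x) v)"
  proof (rule frechet_derivative_at[symmetric])
    have df: "(iter_pd is f has_derivative frechet_derivative (iter_pd is f) (at x)) (at x)"
      using f Cons.prems frechet_derivative_works unfolding C_inf_on_def by blast
    have dg: "(iter_pd is g has_derivative frechet_derivative (iter_pd is g) (at x)) (at x)"
      using g Cons.prems frechet_derivative_works unfolding C_inf_on_def by blast
    show "((\<lambda>y. a * iter_pd is f y + b * iter_pd is g y) has_derivative
        (\<lambda>v. a * frechet_derivative (iter_pd is f) (at x) v + b * frechet_derivative (iter_pd is g) (at x) v)) (at x)"
      by (rule has_derivative_add[OF has_derivative_mult_right[OF df] has_derivative_mult_right[OF dg]])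
  qed
  finally show ?case by simp
qed

lemma Cinf_lin:
  fixes f g :: "real^'n \<Rightarrow> real"
  assumes f: "C_inf_on (-{0}) f" and g: "C_inf_on (-{0}) g"
  shows "C_inf_on (-{0}) (\<lambda>y. a * f y + b * g y)"
  unfolding C_inf_on_def
proof (intro allI ballI)
  fix "is" and x :: "real^'n" assume x: "x \<in> -{0}"
  have dd: "(\<lambda>y. a * iter_pd is f y + b * iter_pd is g y) differentiable at x"
    using f g x unfolding C_inf_on_def
    by (intro differentiable_add differentiable_mult differentiable_const) auto
  show "iter_pd is (\<lambda>y. a * f y + b * g y) differentiable at x"
    by (rule diff_cong[OF open_punct x _ dd]) (use iter_pd_lin[OF f g] in auto)
qed

lemma radial_ext_lin:
  "radial_ext (\<lambda>y. a * f y + b * g y) = (\<lambda>x. a * radial_ext f x + b * radial_ext g x)"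
  by (simp add: radial_ext_def fun_eq_iff)

lemma smooth_lin:
  fixes f g :: "real^'n \<Rightarrow> real"
  assumes "f \<in> smooth_sphere" "g \<in> smooth_sphere"
  shows "(\<lambda>y. a * f y + b * g y) \<in> smooth_sphere"
  using assms Cinf_lin[of "radial_ext f" "radial_ext g" a b]
  unfolding smooth_sphere_def by (simp add: radial_ext_lin Compl_eq_Diff_UNIV)

lemma smooth_scale:
  fixes f :: "real^'n \<Rightarrow> real"
  assumes "f \<in> smooth_sphere"
  shows "(\<lambda>y. a * f y) \<in> smooth_sphere"
  using smooth_lin[OF assms assms, of a 0] by simp

lemma smooth_add:
  fixes f :: "real^'n \<Rightarrow> real"
  assumes "f \<in> smooth_sphere" "g \<in> smooth_sphere"
  shows "(\<lambda>y. f y + b * g y) \<in> smooth_sphere"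
  using smooth_lin[OF assms, of 1 b] by simp

lemma smooth_coord:
  fixes u :: "real^'n \<Rightarrow> real"
  assumes "u \<in> smooth_sphere"
  shows "(\<lambda>y. y $ i * u y) \<in> smooth_sphere"
proof -
  have C: "C_inf_on (-{0}) (radial_ext u)"
    using assms unfolding smooth_sphere_def by (simp add: Compl_eq_Diff_UNIV)
  have m: "(\<lambda>x. (x $ i * (1 / norm x)) * iter_pd [] (radial_ext u) x) \<in> alg (radial_ext u)"
    by (intro alg.mult alg.coord alg.inv alg.base)
  have "C_inf_on (-{0}) (radial_ext (\<lambda>y. y $ i * u y))"
    by (rule alg_Cinf[OF C m]) (simp add: radial_ext_def divide_inverse)
  then show ?thesis using assms unfolding smooth_sphere_def by (simp add: Compl_eq_Diff_UNIV)
qed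


locale fsa =
  fixes j :: nat and L :: "(real^'n \<Rightarrow> real) list \<Rightarrow> real^'n \<Rightarrow> real"
  assumes FSA: "formally_self_adjoint j L"
begin

lemma Lout: "length us = j \<Longrightarrow> set us \<subseteq> smooth_sphere \<Longrightarrow> L us \<in> smooth_sphere"
  using FSA unfolding formally_self_adjoint_def j_diffop_def by blast

lemma perm: "length us = j + 1 \<Longrightarrow> set us \<subseteq> smooth_sphere \<Longrightarrow> mset vs = mset us \<Longrightarrow>
    sa_form L vs = sa_form L us"
  using FSA unfolding formally_self_adjoint_def by blast

lemma head_lin:
  assumes "f \<in> smooth_sphere" "g \<in> smooth_sphere" "length rest = j" "set rest \<subseteq> smooth_sphere"
  shows "sa_form L ((\<lambda>y. f y + t * g y) # rest) = sa_form L (f # rest) + t * sa_form L (g # rest)"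
proof -
  have cL: "continuous_on (sphere 0 1) (L rest)" by (rule smooth_cont[OF Lout[OF assms(3,4)]])
  have cf: "continuous_on (sphere 0 1) (\<lambda>y. f y * L rest y)"
    by (intro continuous_on_mult smooth_cont assms(1) cL)
  have cg: "continuous_on (sphere 0 1) (\<lambda>y. t * (g y * L rest y))"
    by (intro continuous_on_mult continuous_on_const smooth_cont assms(2) cL)
  have "sa_form L ((\<lambda>y. f y + t * g y) # rest) = sphere_int (\<lambda>y. f y * L rest y + t * (g y * L rest y))"
    unfolding sa_form_def by (simp add: algebra_simps)
  also have "\<dots> = sphere_int (\<lambda>y. f y * L rest y) + sphere_int (\<lambda>y. t * (g y * L rest y))"
    by (rule sint_add[OF cf cg])
  also have "\<dots> = sa_form L (f # rest) + t * sa_form L (g # rest)"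
    unfolding sa_form_def sint_cmult by simp
  finally show ?thesis .
qed

lemma head_scale:
  "sa_form L ((\<lambda>y. c * f y) # rest) = c * sa_form L (f # rest)"
  unfolding sa_form_def using sint_cmult[of c "\<lambda>y. f y * L rest y"] by (simp add: mult.assoc)

lemma slot_lin:
  assumes "f \<in> smooth_sphere" "g \<in> smooth_sphere" "length xs + length ys = j"
    "set xs \<subseteq> smooth_sphere" "set ys \<subseteq> smooth_sphere"
  shows "sa_form L (xs @ (\<lambda>y. f y + t * g y) # ys) = sa_form L (xs @ f # ys) + t * sa_form L (xs @ g # ys)"
proof -
  have z: "(\<lambda>y. f y + t * g y) \<in> smooth_sphere" by (rule smooth_add[OF assms(1,2)])
  have "sa_form L (xs @ (\<lambda>y. f y + t * g y) # ys) = sa_form L ((\<lambda>y. f y + t * g y) # xs @ ys)"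
    by (rule perm) (use assms z in auto)
  also have "\<dots> = sa_form L (f # xs @ ys) + t * sa_form L (g # xs @ ys)"
    by (rule head_lin) (use assms in auto)
  also have "sa_form L (f # xs @ ys) = sa_form L (xs @ f # ys)"
    by (rule perm) (use assms in auto)
  also have "sa_form L (g # xs @ ys) = sa_form L (xs @ g # ys)"
    by (rule perm) (use assms in auto)
  finally show ?thesis .
qed

lemma slot_scale:
  assumes "f \<in> smooth_sphere" "length xs + length ys = j"
    "set xs \<subseteq> smooth_sphere" "set ys \<subseteq> smooth_sphere"
  shows "sa_form L (xs @ (\<lambda>y. c * f y) # ys) = c * sa_form L (xs @ f # ys)"
proof -
  have z: "(\<lambda>y. c * f y) \<in> smooth_sphere" by (rule smooth_scale[OF assms(1)])
  have "sa_form L (xs @ (\<lambda>y. c * f y) # ys) = sa_form L ((\<lambda>y. c * f y) # xs @ ys)"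
    by (rule perm) (use assms z in auto)
  also have "\<dots> = c * sa_form L (f # xs @ ys)" by (rule head_scale)
  also have "sa_form L (f # xs @ ys) = sa_form L (xs @ f # ys)"
    by (rule perm) (use assms in auto)
  finally show ?thesis .
qed

lemma scale_rep:
  assumes "f \<in> smooth_sphere" "set rest \<subseteq> smooth_sphere" "k + length rest = j + 1"
  shows "sa_form L (replicate k (\<lambda>y. c * f y) @ rest) = c ^ k * sa_form L (replicate k f @ rest)"
  using assms(2,3)
proof (induction k arbitrary: rest)
  case 0
  then show ?case by simp
next
  case (Suc k)
  have z: "(\<lambda>y. c * f y) \<in> smooth_sphere" by (rule smooth_scale[OF assms(1)])
  have "sa_form L (replicate (Suc k) (\<lambda>y. c * f y) @ rest) = sa_form L (replicate k (\<lambda>y. c * f y) @ (\<lambda>y. c * f y) # rest)"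
    by (simp add: replicate_app_Cons_same)
  also have "\<dots> = c ^ k * sa_form L (replicate k f @ (\<lambda>y. c * f y) # rest)"
    by (rule Suc.IH) (use Suc.prems z in auto)
  also have "sa_form L (replicate k f @ (\<lambda>y. c * f y) # rest) = c * sa_form L (replicate k f @ f # rest)"
    by (rule slot_scale) (use Suc.prems assms(1) in auto)
  also have "replicate k f @ f # rest = replicate (Suc k) f @ rest"
    by (simp add: replicate_app_Cons_same)
  finally show ?case by simp
qed

end

lemma pascal_sum:
  fixes A :: "nat \<Rightarrow> real"
  shows "(\<Sum>m\<le>Suc k. real (Suc k choose m) * t ^ m * A m) =
    (\<Sum>m\<le>k. real (k choose m) * t ^ m * A m) + (\<Sum>m\<le>k. real (k choose m) * t ^ Suc m * A (Suc m))"
proof -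
  have "(\<Sum>m\<le>Suc k. real (Suc k choose m) * t ^ m * A m)
      = A 0 + (\<Sum>m\<le>k. real (Suc k choose Suc m) * t ^ Suc m * A (Suc m))"
    by (subst sum.atMost_Suc_shift) simp
  also have "\<dots> = A 0 + (\<Sum>m\<le>k. real (k choose Suc m) * t ^ Suc m * A (Suc m))
      + (\<Sum>m\<le>k. real (k choose m) * t ^ Suc m * A (Suc m))"
    by (simp add: sum.distrib algebra_simps)
  also have "A 0 + (\<Sum>m\<le>k. real (k choose Suc m) * t ^ Suc m * A (Suc m))
      = (\<Sum>m\<le>k. real (k choose m) * t ^ m * A m)"
  proof (cases k)
    case 0
    then show ?thesis by simp
  next
    case (Suc k')
    have "(\<Sum>m\<le>k. real (k choose m) * t ^ m * A m) = A 0 + (\<Sum>m\<le>k'. real (k choose Suc m) * t ^ Suc m * A (Suc m))"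
      unfolding Suc by (subst sum.atMost_Suc_shift) simp
    moreover have "(\<Sum>m\<le>k. real (k choose Suc m) * t ^ Suc m * A (Suc m)) = (\<Sum>m\<le>k'. real (k choose Suc m) * t ^ Suc m * A (Suc m))"
      unfolding Suc by (simp add: binomial_eq_0)
    ultimately show ?thesis by simp
  qed
  finally show ?thesis .
qed

context fsa
begin

lemma expand:
  assumes f: "f \<in> smooth_sphere" and g: "g \<in> smooth_sphere"
  shows "set rest \<subseteq> smooth_sphere \<Longrightarrow> k + length rest = j + 1 \<Longrightarrow>
    sa_form L (replicate k (\<lambda>y. f y + t * g y) @ rest) =
    (\<Sum>m\<le>k. real (k choose m) * t ^ m * sa_form L (replicate m g @ replicate (k - m) f @ rest))"
proof (induction k arbitrary: rest)
  case 0
  then show ?case by simp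
next
  case (Suc k)
  define z where "z = (\<lambda>y. f y + t * g y)"
  have z: "z \<in> smooth_sphere" unfolding z_def by (rule smooth_add[OF f g])
  define A where "A m = sa_form L (replicate m g @ replicate (Suc k - m) f @ rest)" for m
  have "sa_form L (replicate (Suc k) z @ rest) = sa_form L (replicate k z @ z # rest)"
    by (simp add: replicate_app_Cons_same)
  also have "\<dots> = (\<Sum>m\<le>k. real (k choose m) * t ^ m * sa_form L (replicate m g @ replicate (k - m) f @ z # rest))"
    unfolding z_def by (rule Suc.IH) (use Suc.prems z[unfolded z_def] in auto)
  also have "\<dots> = (\<Sum>m\<le>k. real (k choose m) * t ^ m * A m) + (\<Sum>m\<le>k. real (k choose m) * t ^ Suc m * A (Suc m))"
    unfolding sum.distrib[symmetric]
  proof (rule sum.cong[OF refl])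
    fix m assume m: "m \<in> {..k}"
    have "sa_form L (replicate m g @ replicate (k - m) f @ z # rest)
        = sa_form L ((replicate m g @ replicate (k - m) f) @ (\<lambda>y. f y + t * g y) # rest)"
      by (simp add: z_def)
    also have "\<dots> = sa_form L ((replicate m g @ replicate (k - m) f) @ f # rest)
        + t * sa_form L ((replicate m g @ replicate (k - m) f) @ g # rest)"
      by (rule slot_lin) (use Suc.prems f g m in auto)
    also have "sa_form L ((replicate m g @ replicate (k - m) f) @ f # rest) = A m"
    proof -
      have "Suc k - m = Suc (k - m)" using m by auto
      then show ?thesis unfolding A_def by (simp add: replicate_app_Cons_same)
    qed
    also have "sa_form L ((replicate m g @ replicate (k - m) f) @ g # rest) = A (Suc m)"
      unfolding A_def
    proof (rule perm)
      show "length (replicate (Suc m) g @ replicate (Suc k - Suc m) f @ rest) = j + 1"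
        using Suc.prems m by auto
      show "set (replicate (Suc m) g @ replicate (Suc k - Suc m) f @ rest) \<subseteq> smooth_sphere"
        using Suc.prems f g by auto
      show "mset ((replicate m g @ replicate (k - m) f) @ g # rest) =
          mset (replicate (Suc m) g @ replicate (Suc k - Suc m) f @ rest)"
        by simp
    qed
    finally show "real (k choose m) * t ^ m * sa_form L (replicate m g @ replicate (k - m) f @ z # rest)
        = real (k choose m) * t ^ m * A m + real (k choose m) * t ^ Suc m * A (Suc m)"
      by (simp add: algebra_simps)
  qed
  also have "\<dots> = (\<Sum>m\<le>Suc k. real (Suc k choose m) * t ^ m * A m)"
    by (rule pascal_sum[symmetric])
  finally show ?case unfolding A_def z_def .
qed

end


lemma deriv_powr_shift:
  assumes "1 + s > (0::real)"
  shows "DERIV (\<lambda>s. c * (1 + s) powr a) s :> c * (a * (1 + s) powr (a - 1))"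
proof -
  have h1: "((\<lambda>z. z powr a) has_real_derivative a * (1 + s) powr (a - 1)) (at (1 + s))"
    by (rule has_real_derivative_powr[OF assms])
  have h2: "((\<lambda>s. 1 + s) has_real_derivative 1) (at s)" by (auto intro!: derivative_eq_intros)
  have "((\<lambda>s. (1 + s) powr a) has_real_derivative a * (1 + s) powr (a - 1) * 1) (at s)"
    using DERIV_chain2[of "\<lambda>z. z powr a" _ "\<lambda>s. 1 + s" s, OF h1 h2] by simp
  then show ?thesis by (auto intro: DERIV_cmult)
qed

lemma taylor3:
  fixes r :: real
  shows "\<exists>K. \<forall>s. \<bar>s\<bar> \<le> 1/2 \<longrightarrow> \<bar>(1 + s) powr r - 1 - r * s - r * (r - 1) / 2 * s^2\<bar> \<le> K * \<bar>s\<bar>^3"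
proof -
  define diff where "diff m = (\<lambda>s::real. (\<Prod>i<m. (r - real i)) * (1 + s) powr (r - real m))" for m
  define B where "B = \<bar>r * (r - 1) * (r - 2)\<bar> / 6 * ((1/2) powr (r - 3) + (3/2) powr (r - 3))"
  have D: "\<forall>m t. m < 3 \<and> -1/2 \<le> t \<and> t \<le> 1/2 \<longrightarrow> DERIV (diff m) t :> diff (Suc m) t"
  proof (intro allI impI)
    fix m :: nat and t :: real assume "m < 3 \<and> -1/2 \<le> t \<and> t \<le> 1/2"
    then have t: "1 + t > 0" by auto
    have "DERIV (diff m) t :> (\<Prod>i<m. (r - real i)) * ((r - real m) * (1 + t) powr (r - real m - 1))"
      unfolding diff_def by (rule deriv_powr_shift[OF t])
    moreover have "(\<Prod>i<m. (r - real i)) * ((r - real m) * (1 + t) powr (r - real m - 1)) = diff (Suc m) t"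
      unfolding diff_def by (simp add: algebra_simps)
    ultimately show "DERIV (diff m) t :> diff (Suc m) t" by simp
  qed
  have d0: "diff 0 = (\<lambda>s. (1 + s) powr r)" unfolding diff_def by simp
  show ?thesis
  proof (intro exI allI impI)
    fix s :: real assume s: "\<bar>s\<bar> \<le> 1/2"
    show "\<bar>(1 + s) powr r - 1 - r * s - r * (r - 1) / 2 * s^2\<bar> \<le> B * \<bar>s\<bar>^3"
    proof (cases "s = 0")
      case True
      then show ?thesis by simp
    next
      case False
      have "\<exists>t. (if s < 0 then s < t \<and> t < 0 else 0 < t \<and> t < s) \<and>
          (1 + s) powr r = (\<Sum>m<3. (diff m 0 / fact m) * (s - 0)^m) + (diff 3 t / fact 3) * (s - 0)^3"
        by (rule Taylor[of 3 diff "\<lambda>s. (1 + s) powr r" "-1/2" "1/2" 0 s]) (use D d0 s False in auto)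
      then obtain t where t: "(if s < 0 then s < t \<and> t < 0 else 0 < t \<and> t < s)"
        and eq: "(1 + s) powr r = (\<Sum>m<3. (diff m 0 / fact m) * (s - 0)^m) + (diff 3 t / fact 3) * (s - 0)^3"
        by blast
      have tb: "1/2 \<le> 1 + t" "1 + t \<le> 3/2" using t s by (auto split: if_splits)
      have e0: "diff 0 0 = 1" by (simp add: diff_def)
      have e1: "diff (Suc 0) 0 = r" by (simp add: diff_def)
      have p2: "(\<Prod>i<2. (r - real i)) = r * (r - 1)" by (simp add: numeral_2_eq_2)
      have e2: "diff 2 0 = r * (r - 1)" by (simp add: diff_def p2)
      have sum: "(\<Sum>m<3. (diff m 0 / fact m) * (s - 0)^m) = 1 + r * s + r * (r - 1) / 2 * s^2"
        by (simp add: numeral_3_eq_3 e0 e1 e2[unfolded numeral_2_eq_2] power2_eq_square)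
      have p3: "(\<Prod>i<3. (r - real i)) = r * (r - 1) * (r - 2)" by (simp add: numeral_3_eq_3)
      have d3: "diff 3 t = r * (r - 1) * (r - 2) * (1 + t) powr (r - 3)"
        unfolding diff_def p3 by simp
      have pb: "(1 + t) powr (r - 3) \<le> (1/2) powr (r - 3) + (3/2) powr (r - 3)"
      proof (cases "r - 3 \<ge> 0")
        case True
        then have "(1 + t) powr (r - 3) \<le> (3/2) powr (r - 3)" using tb by (intro powr_mono2) auto
        then show ?thesis by (smt (verit) powr_ge_zero)
      next
        case False
        then have "(1 + t) powr (r - 3) \<le> (1/2) powr (r - 3)" using tb by (intro powr_mono2') auto
        then show ?thesis by (smt (verit) powr_ge_zero)
      qed
      have "\<bar>(1 + s) powr r - 1 - r * s - r * (r - 1) / 2 * s^2\<bar> = \<bar>diff 3 t / 6 * s^3\<bar>"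
        unfolding eq sum by (simp add: eval_nat_numeral)
      also have "\<dots> = \<bar>r * (r - 1) * (r - 2)\<bar> / 6 * (1 + t) powr (r - 3) * \<bar>s\<bar>^3"
        unfolding d3 by (simp add: abs_mult power_abs)
      also have "\<dots> \<le> B * \<bar>s\<bar>^3"
        unfolding B_def by (intro mult_right_mono mult_left_mono pb) auto
      finally show ?thesis .
    qed
  qed
qed

lemma quad_nonneg:
  fixes \<alpha> \<beta> K \<delta> :: real
  assumes "\<delta> > 0" "\<And>t. \<bar>t\<bar> < \<delta> \<Longrightarrow> \<alpha> * t + \<beta> * t^2 \<ge> - K * \<bar>t\<bar>^3"
  shows "\<beta> \<ge> 0"
proof (rule ccontr)
  assume "\<not> \<beta> \<ge> 0"
  then have b: "\<beta> < 0" by simp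
  define \<tau> where "\<tau> = min (\<delta>/2) (- \<beta> / (2 * (\<bar>K\<bar> + 1)))"
  have tp: "\<tau> > 0" using b assms(1) unfolding \<tau>_def by (auto simp: field_simps)
  have tl: "\<tau> < \<delta>" using assms(1) unfolding \<tau>_def by auto
  have tk: "\<bar>K\<bar> * \<tau> \<le> - \<beta> / 2"
  proof -
    have "\<tau> \<le> - \<beta> / (2 * (\<bar>K\<bar> + 1))" unfolding \<tau>_def by auto
    then have "\<bar>K\<bar> * \<tau> \<le> \<bar>K\<bar> * (- \<beta> / (2 * (\<bar>K\<bar> + 1)))" by (intro mult_left_mono) auto
    also have "\<dots> \<le> - \<beta> / 2"
      using b by (simp add: field_simps)
    finally show ?thesis .
  qed
  define t where "t = (if \<alpha> \<ge> 0 then - \<tau> else \<tau>)"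
  have at: "\<bar>t\<bar> = \<tau>" unfolding t_def using tp by auto
  have ap: "\<alpha> * t \<le> 0" unfolding t_def using tp by (auto simp: mult_le_0_iff)
  have "\<alpha> * t + \<beta> * t^2 \<ge> - K * \<bar>t\<bar>^3" using assms(2) at tl by auto
  then have "\<beta> * t^2 \<ge> - K * \<bar>t\<bar>^3" using ap by linarith
  moreover have "t^2 = \<tau>^2" using at by (metis power2_abs)
  ultimately have "\<beta> * \<tau>^2 \<ge> - K * \<tau>^3" using at by simp
  then have "\<beta> * \<tau>^2 \<ge> - (K * \<tau>) * \<tau>^2" by (simp add: power2_eq_square power3_eq_cube algebra_simps)
  moreover have "\<tau>^2 > 0" using tp by simp
  ultimately have "\<beta> \<ge> - K * \<tau>" by (metis mult_le_cancel_right_pos mult_minus_left)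
  moreover have "- K * \<tau> \<ge> - \<bar>K\<bar> * \<tau>" using tp by (simp add: mult_right_mono)
  ultimately show False using tk b by linarith
qed


lemma sum_split3:
  fixes h :: "nat \<Rightarrow> real"
  assumes "N \<ge> 2"
  shows "(\<Sum>m\<le>N. h m) = h 0 + h 1 + h 2 + (\<Sum>m\<in>{3..N}. h m)"
proof -
  have "{..N} = insert 0 (insert 1 (insert 2 {3..N}))" using assms by auto
  then show ?thesis by simp
qed

lemma bnd_pd:
  fixes f :: "real^'n \<Rightarrow> real"
  assumes C: "C_inf_on (-{0}) f"
  shows "\<exists>M\<ge>0. \<forall>is. length is \<le> m \<longrightarrow> (\<forall>x\<in>sphere 0 1. \<bar>iter_pd is f x\<bar> \<le> M)"
proof -
  have "\<forall>is. \<exists>B\<ge>0. \<forall>x\<in>sphere 0 1. \<bar>iter_pd is f x\<bar> \<le> B"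
  proof
    fix "is" :: "'n list"
    have cont: "continuous_on (sphere 0 1) (iter_pd is f)"
    proof (intro continuous_at_imp_continuous_on ballI differentiable_imp_continuous_within)
      fix x :: "real^'n" assume "x \<in> sphere 0 1"
      then have "x \<in> -{0}" by auto
      then show "iter_pd is f differentiable at x" using C unfolding C_inf_on_def by blast
    qed
    obtain B where B: "\<forall>z\<in>iter_pd is f ` sphere 0 1. norm z \<le> B"
      using compact_imp_bounded[OF compact_continuous_image[OF cont compact_sphere]]
      unfolding bounded_iff by blast
    show "\<exists>B\<ge>0. \<forall>x\<in>sphere 0 1. \<bar>iter_pd is f x\<bar> \<le> B"
      by (rule exI[of _ "max B 0"]) (use B in auto)
  qed
  then obtain B where B: "\<And>is. B is \<ge> 0 \<and> (\<forall>x\<in>sphere 0 1. \<bar>iter_pd is f x\<bar> \<le> B is)"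
    by metis
  define S where "S = {xs :: 'n list. set xs \<subseteq> UNIV \<and> length xs \<le> m}"
  have fS: "finite S" unfolding S_def by (rule finite_lists_length_le) simp
  show ?thesis
  proof (intro exI conjI allI impI ballI)
    show "0 \<le> (\<Sum>is\<in>S. B is)" using B by (simp add: sum_nonneg)
    fix "is" :: "'n list" and x :: "real^'n" assume l: "length is \<le> m" and x: "x \<in> sphere 0 1"
    have "\<bar>iter_pd is f x\<bar> \<le> B is" using B x by blast
    also have "B is \<le> (\<Sum>is\<in>S. B is)"
      by (rule member_le_sum) (use B l fS in \<open>auto simp: S_def\<close>)
    finally show "\<bar>iter_pd is f x\<bar> \<le> (\<Sum>is\<in>S. B is)" .
  qed
qed

locale main = fsa j L for j and L :: "(real^'n \<Rightarrow> real) list \<Rightarrow> real^'n \<Rightarrow> real" +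
  fixes p :: real and u :: "real^'n \<Rightarrow> real"
  assumes uSM: "u \<in> smooth_sphere" and upos: "\<forall>x\<in>sphere 0 1. u x > 0"
    and cons: "sphere_int (\<lambda>x. \<bar>u x\<bar> powr p) = omega TYPE('n)"
    and ppos: "p > 0"
    and lmin: "local_minimizer (energy j L) (constraint_set p) u"
    and mom: "\<forall>i. sphere_int (\<lambda>x. x $ i * u x powr p) = 0"
    and jpos: "j > 0"
begin

lemma energy_sa: "energy j L z = sa_form L (replicate (j + 1) z)"
  unfolding energy_def sa_form_def by simp

lemma wSM: "(\<lambda>y. y $ i * u y) \<in> smooth_sphere"
  by (rule smooth_coord[OF uSM])

lemma Ez_taylor:
  fixes i :: 'n
  defines "w \<equiv> (\<lambda>y. y $ i * u y)"
  shows "\<exists>K2. \<forall>t. \<bar>t\<bar> \<le> 1 \<longrightarrow>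
    \<bar>energy j L (\<lambda>y. u y + t * w y) - (energy j L u + real (j + 1) * t * sa_form L (w # replicate j u)
       + real ((j + 1) choose 2) * t^2 * sa_form L (w # w # replicate (j - 1) u))\<bar> \<le> K2 * \<bar>t\<bar>^3"
proof -
  have w: "w \<in> smooth_sphere" unfolding w_def by (rule wSM)
  define G where "G m = sa_form L (replicate m w @ replicate (j + 1 - m) u)" for m
  have ex: "energy j L (\<lambda>y. u y + t * w y) = (\<Sum>m\<le>j+1. real ((j + 1) choose m) * t ^ m * G m)" for t
    unfolding energy_sa G_def using expand[OF uSM w, of "[]" "j + 1" t] by simp
  have G0: "G 0 = energy j L u" unfolding G_def energy_sa by simp
  have G1: "G 1 = sa_form L (w # replicate j u)" unfolding G_def by simp
  have G2: "G 2 = sa_form L (w # w # replicate (j - 1) u)"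
    unfolding G_def by (simp add: numeral_2_eq_2)
  define K2 where "K2 = (\<Sum>m\<in>{3..j+1}. real ((j + 1) choose m) * \<bar>G m\<bar>)"
  show ?thesis
  proof (intro exI allI impI)
    fix t :: real assume t: "\<bar>t\<bar> \<le> 1"
    have "energy j L (\<lambda>y. u y + t * w y) = G 0 + real (j + 1) * t * G 1 + real ((j + 1) choose 2) * t^2 * G 2
      + (\<Sum>m\<in>{3..j+1}. real ((j + 1) choose m) * t ^ m * G m)"
      unfolding ex using sum_split3[of "j + 1" "\<lambda>m. real ((j + 1) choose m) * t ^ m * G m"] jpos
      by (simp add: power2_eq_square)
    then have "\<bar>energy j L (\<lambda>y. u y + t * w y) - (energy j L u + real (j + 1) * t * sa_form L (w # replicate j u)
       + real ((j + 1) choose 2) * t^2 * sa_form L (w # w # replicate (j - 1) u))\<bar>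
       = \<bar>\<Sum>m\<in>{3..j+1}. real ((j + 1) choose m) * t ^ m * G m\<bar>"
      using G0 G1 G2 by simp
    also have "\<dots> \<le> (\<Sum>m\<in>{3..j+1}. \<bar>real ((j + 1) choose m) * t ^ m * G m\<bar>)"
      by (rule sum_abs)
    also have "\<dots> \<le> (\<Sum>m\<in>{3..j+1}. real ((j + 1) choose m) * \<bar>G m\<bar> * \<bar>t\<bar>^3)"
    proof (rule sum_mono)
      fix m assume m: "m \<in> {3..j+1}"
      have "\<bar>t\<bar> ^ m \<le> \<bar>t\<bar> ^ 3" using m t by (intro power_decreasing) auto
      then show "\<bar>real ((j + 1) choose m) * t ^ m * G m\<bar> \<le> real ((j + 1) choose m) * \<bar>G m\<bar> * \<bar>t\<bar>^3"
      proof -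
        have "\<bar>real ((j + 1) choose m) * t ^ m * G m\<bar> = (real ((j + 1) choose m) * \<bar>G m\<bar>) * \<bar>t\<bar> ^ m"
          by (simp add: abs_mult power_abs)
        also have "\<dots> \<le> (real ((j + 1) choose m) * \<bar>G m\<bar>) * \<bar>t\<bar> ^ 3"
          by (rule mult_left_mono[OF \<open>\<bar>t\<bar> ^ m \<le> \<bar>t\<bar> ^ 3\<close>]) simp
        finally show ?thesis .
      qed
    qed
    also have "\<dots> = K2 * \<bar>t\<bar>^3" unfolding K2_def by (rule sum_distrib_right[symmetric])
    finally show "\<bar>energy j L (\<lambda>y. u y + t * w y) - (energy j L u + real (j + 1) * t * sa_form L (w # replicate j u)
       + real ((j + 1) choose 2) * t^2 * sa_form L (w # w # replicate (j - 1) u))\<bar> \<le> K2 * \<bar>t\<bar>^3" .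
  qed
qed

lemma u0: "u 0 = 0"
  using uSM unfolding smooth_sphere_def by auto

lemma uC: "continuous_on (sphere 0 1) u"
  by (rule smooth_cont[OF uSM])

lemma comp_le: "(y::real^'n) \<in> sphere 0 1 \<Longrightarrow> \<bar>y $ i\<bar> \<le> 1"
  using component_le_norm_cart[of y i] by simp

lemma upC: "continuous_on (sphere 0 1) (\<lambda>y. u y powr p)"
  using upos by (intro continuous_intros uC) auto

lemma c_taylor:
  fixes i :: 'n
  shows "\<exists>K1. \<forall>t. \<bar>t\<bar> \<le> 1/2 \<longrightarrow> \<bar>sphere_int (\<lambda>y. \<bar>u y + t * (y $ i * u y)\<bar> powr p) - omega TYPE('n)
      - p * (p - 1) / 2 * t^2 * sphere_int (\<lambda>y. (y $ i)^2 * u y powr p)\<bar> \<le> K1 * \<bar>t\<bar>^3"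
proof -
  obtain K where K: "\<And>s. \<bar>s\<bar> \<le> 1/2 \<Longrightarrow> \<bar>(1 + s) powr p - 1 - p * s - p * (p - 1) / 2 * s^2\<bar> \<le> K * \<bar>s\<bar>^3"
    using taylor3[of p] by blast
  show ?thesis
  proof (intro exI allI impI)
    fix t :: real assume t: "\<bar>t\<bar> \<le> 1/2"
    have st: "\<bar>t * y $ i\<bar> \<le> 1/2" if "y \<in> sphere 0 1" for y :: "real^'n"
    proof -
      have "\<bar>t * y $ i\<bar> = \<bar>t\<bar> * \<bar>y $ i\<bar>" by (simp add: abs_mult)
      also have "\<dots> \<le> \<bar>t\<bar> * 1" by (intro mult_left_mono comp_le that) auto
      finally show ?thesis using t by simp
    qed
    define F1 where "F1 y = u y powr p" for y :: "real^'n"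
    define F2 where "F2 y = y $ i * u y powr p" for y :: "real^'n"
    define F3 where "F3 y = (y $ i)^2 * u y powr p" for y :: "real^'n"
    define R where "R y = u y powr p * ((1 + t * y $ i) powr p - 1 - p * (t * y $ i) - p * (p - 1) / 2 * (t * y $ i)^2)" for y :: "real^'n"
    have cF1: "continuous_on (sphere 0 1) F1" unfolding F1_def by (rule upC)
    have cF2: "continuous_on (sphere 0 1) F2" unfolding F2_def by (intro continuous_intros upC)
    have cF3: "continuous_on (sphere 0 1) F3" unfolding F3_def by (intro continuous_intros upC)
    have nz: "1 + t * y $ i \<noteq> 0" if "y \<in> sphere 0 1" for y :: "real^'n"
      using st[OF that] by auto
    have un: "u y \<noteq> 0" if "y \<in> sphere 0 1" for y :: "real^'n"
      using upos that by force
    have cR: "continuous_on (sphere 0 1) R" unfolding R_def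
      using nz un by (intro continuous_intros upC uC) auto
    have pw: "\<bar>u y + t * (y $ i * u y)\<bar> powr p = ((F1 y + (p * t) * F2 y) + (p * (p - 1) / 2 * t^2) * F3 y) + R y"
      if "y \<in> sphere 0 1 \<or> y = 0" for y :: "real^'n"
    proof (cases "y = 0")
      case True
      then show ?thesis by (simp add: F1_def F2_def F3_def R_def u0)
    next
      case False
      then have y: "y \<in> sphere 0 1" using that by auto
      have pos: "1 + t * y $ i > 0" using st[OF y] by auto
      have uy: "u y > 0" using upos y by auto
      have e: "u y + t * (y $ i * u y) = u y * (1 + t * y $ i)" by (simp add: algebra_simps)
      have "\<bar>u y + t * (y $ i * u y)\<bar> = u y * (1 + t * y $ i)"
        unfolding e using uy pos by simp
      then have "\<bar>u y + t * (y $ i * u y)\<bar> powr p = u y powr p * (1 + t * y $ i) powr p"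
        by (simp add: powr_mult)
      then show ?thesis unfolding F1_def F2_def F3_def R_def by (simp add: algebra_simps power2_eq_square)
    qed
    have "sphere_int (\<lambda>y. \<bar>u y + t * (y $ i * u y)\<bar> powr p)
        = sphere_int (\<lambda>y. ((F1 y + (p * t) * F2 y) + (p * (p - 1) / 2 * t^2) * F3 y) + R y)"
    proof (rule sint_cong)
      show "\<forall>x\<in>sphere 0 1. \<bar>u x + t * (x $ i * u x)\<bar> powr p = F1 x + p * t * F2 x + p * (p - 1) / 2 * t\<^sup>2 * F3 x + R x"
        using pw by blast
      show "\<bar>u 0 + t * (0 $ i * u 0)\<bar> powr p = F1 0 + p * t * F2 0 + p * (p - 1) / 2 * t\<^sup>2 * F3 0 + R 0"
        by (rule pw) simp
    qed
    also have "\<dots> = ((sphere_int F1 + (p * t) * sphere_int F2) + (p * (p - 1) / 2 * t^2) * sphere_int F3) + sphere_int R"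
    proof -
      define c1 where "c1 = p * t"
      define c2 where "c2 = p * (p - 1) / 2 * t^2"
      have "sphere_int (\<lambda>y. ((F1 y + c1 * F2 y) + c2 * F3 y) + R y)
          = ((sphere_int F1 + c1 * sphere_int F2) + c2 * sphere_int F3) + sphere_int R"
        using cF1 cF2 cF3 cR
        by (simp add: sint_add sint_cmult continuous_on_add continuous_on_mult continuous_on_const)
      then show ?thesis unfolding c1_def c2_def .
    qed
    also have "sphere_int F1 = omega TYPE('n)"
      unfolding cons[symmetric] F1_def by (rule sint_cong) (use upos u0 in auto)
    also have "sphere_int F2 = 0" using mom unfolding F2_def by simp
    finally have I: "sphere_int (\<lambda>y. \<bar>u y + t * (y $ i * u y)\<bar> powr p) - omega TYPE('n)
      - p * (p - 1) / 2 * t^2 * sphere_int F3 = sphere_int R" by simp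
    have "\<bar>sphere_int R\<bar> \<le> sphere_int (\<lambda>y. (K * \<bar>t\<bar>^3) * F1 y)"
    proof (rule sint_abs_le[OF cR])
      show "continuous_on (sphere 0 1) (\<lambda>y. (K * \<bar>t\<bar>^3) * F1 y)" by (intro continuous_intros cF1)
      show "\<bar>R 0\<bar> \<le> K * \<bar>t\<bar> ^ 3 * F1 0" by (simp add: R_def F1_def u0)
      fix y :: "real^'n" assume y: "y \<in> sphere 0 1"
      have Ks: "\<bar>(1 + t * y $ i) powr p - 1 - p * (t * y $ i) - p * (p - 1) / 2 * (t * y $ i)^2\<bar> \<le> K * \<bar>t * y $ i\<bar>^3"
        by (rule K[OF st[OF y]])
      have "0 \<le> K * \<bar>1/2::real\<bar>^3" using K[of "1/2"] abs_ge_zero order_trans by simp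
      then have "K \<ge> 0" by (simp add: zero_le_mult_iff)
      then have "K * \<bar>t * y $ i\<bar>^3 \<le> K * \<bar>t\<bar>^3"
        using comp_le[OF y] by (intro mult_left_mono power_mono) (auto simp: abs_mult mult_left_le)
      with Ks have "\<bar>(1 + t * y $ i) powr p - 1 - p * (t * y $ i) - p * (p - 1) / 2 * (t * y $ i)^2\<bar> \<le> K * \<bar>t\<bar>^3"
        by linarith
      then show "\<bar>R y\<bar> \<le> K * \<bar>t\<bar> ^ 3 * F1 y"
        unfolding R_def F1_def by (simp add: abs_mult mult_left_mono mult.commute)
    qed
    also have "\<dots> = (K * omega TYPE('n)) * \<bar>t\<bar>^3"
      using \<open>sphere_int F1 = omega TYPE('n)\<close> by (simp add: sint_cmult)
    finally show "\<bar>sphere_int (\<lambda>y. \<bar>u y + t * (y $ i * u y)\<bar> powr p) - omega TYPE('n)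
      - p * (p - 1) / 2 * t^2 * sphere_int (\<lambda>y. (y $ i)^2 * u y powr p)\<bar> \<le> (K * omega TYPE('n)) * \<bar>t\<bar>^3"
      using I unfolding F3_def by simp
  qed
qed

lemma locmin:
  fixes i :: 'n and A K :: real
  defines "w \<equiv> (\<lambda>y. y $ i * u y)"
  defines "c \<equiv> (\<lambda>t. sphere_int (\<lambda>y. \<bar>u y + t * (y $ i * u y)\<bar> powr p) / omega TYPE('n))"
  assumes ct: "\<And>t. \<bar>t\<bar> \<le> 1/2 \<Longrightarrow> \<bar>c t - 1 - A * t^2\<bar> \<le> K * \<bar>t\<bar>^3"
  shows "eventually (\<lambda>t. energy j L (\<lambda>y. u y + t * w y) \<ge> c t powr ((j + 1) / p) * energy j L u) (at 0)"
proof -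
  have om: "omega TYPE('n) > 0" by (rule omega_pos)
  have wS: "w \<in> smooth_sphere" unfolding w_def by (rule wSM)
  have ev_half: "eventually (\<lambda>t::real. \<bar>t\<bar> \<le> 1/2) (at 0)"
    unfolding eventually_at by (rule exI[of _ "1/2"]) (auto simp: dist_real_def)
  have c1: "(c \<longlongrightarrow> 1) (at 0)"
  proof -
    have "((\<lambda>t. c t - 1) \<longlongrightarrow> 0) (at 0)"
    proof (rule Lim_null_comparison)
      show "eventually (\<lambda>t. norm (c t - 1) \<le> \<bar>A\<bar> * t^2 + \<bar>K\<bar> * \<bar>t\<bar>^3) (at 0)"
      proof (rule eventually_mono[OF ev_half])
        fix t :: real assume t: "\<bar>t\<bar> \<le> 1/2"
        have "\<bar>c t - 1\<bar> \<le> \<bar>A * t^2\<bar> + K * \<bar>t\<bar>^3" using ct[OF t] by linarith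
        also have "\<dots> \<le> \<bar>A\<bar> * t^2 + \<bar>K\<bar> * \<bar>t\<bar>^3"
          by (auto simp: abs_mult intro!: mult_right_mono)
        finally show "norm (c t - 1) \<le> \<bar>A\<bar> * t^2 + \<bar>K\<bar> * \<bar>t\<bar>^3" by simp
      qed
      have "((\<lambda>t::real. \<bar>A\<bar> * t^2 + \<bar>K\<bar> * \<bar>t\<bar>^3) \<longlongrightarrow> \<bar>A\<bar> * 0^2 + \<bar>K\<bar> * \<bar>0\<bar>^3) (at 0)"
        by (intro tendsto_intros)
      then show "((\<lambda>t::real. \<bar>A\<bar> * t^2 + \<bar>K\<bar> * \<bar>t\<bar>^3) \<longlongrightarrow> 0) (at 0)" by simp
    qed
    from tendsto_add[OF this tendsto_const[of 1]] show ?thesis by simp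
  qed
  define lam where "lam t = c t powr (- 1 / p)" for t
  have l1: "(lam \<longlongrightarrow> 1) (at 0)"
    using tendsto_powr[OF c1 tendsto_const[of "-1/p"]] unfolding lam_def by simp
  have l0: "((\<lambda>t. \<bar>lam t - 1\<bar> + \<bar>lam t * t\<bar>) \<longlongrightarrow> \<bar>1 - 1\<bar> + \<bar>1 * 0\<bar>) (at 0)"
    by (intro tendsto_intros l1)
  obtain m0 \<epsilon> where eps: "\<epsilon> > 0" and mn: "\<And>v. v \<in> constraint_set p \<Longrightarrow> cm_close m0 \<epsilon> u v \<Longrightarrow> energy j L v \<ge> energy j L u"
    using lmin unfolding local_minimizer_def by blast
  have Cu: "C_inf_on (-{0}) (radial_ext u)"
    using uSM unfolding smooth_sphere_def by (simp add: Compl_eq_Diff_UNIV)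
  have Cw: "C_inf_on (-{0}) (radial_ext w)"
    using wS unfolding smooth_sphere_def by (simp add: Compl_eq_Diff_UNIV)
  obtain Mu where Mu: "Mu \<ge> 0" "\<And>is x. length is \<le> m0 \<Longrightarrow> x \<in> sphere 0 1 \<Longrightarrow> \<bar>iter_pd is (radial_ext u) x\<bar> \<le> Mu"
    using bnd_pd[OF Cu, of m0] by blast
  obtain Mw where Mw: "Mw \<ge> 0" "\<And>is x. length is \<le> m0 \<Longrightarrow> x \<in> sphere 0 1 \<Longrightarrow> \<bar>iter_pd is (radial_ext w) x\<bar> \<le> Mw"
    using bnd_pd[OF Cw, of m0] by blast
  define M where "M = Mu + Mw"
  have ev1: "eventually (\<lambda>t. \<bar>lam t - 1\<bar> + \<bar>lam t * t\<bar> < \<epsilon> / (M + 1)) (at 0)"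
    using order_tendstoD(2)[OF l0, of "\<epsilon> / (M + 1)"] eps Mu Mw unfolding M_def by simp
  have ev2: "eventually (\<lambda>t. c t > 0) (at 0)"
    using order_tendstoD(1)[OF c1, of 0] by simp
  show ?thesis
  proof (rule eventually_mono[OF eventually_conj[OF ev1 ev2]])
    fix t assume "\<bar>lam t - 1\<bar> + \<bar>lam t * t\<bar> < \<epsilon> / (M + 1) \<and> c t > 0"
    then have small: "\<bar>lam t - 1\<bar> + \<bar>lam t * t\<bar> < \<epsilon> / (M + 1)" and cp: "c t > 0" by auto
    define z where "z = (\<lambda>y. u y + t * w y)"
    have zS: "z \<in> smooth_sphere" unfolding z_def by (rule smooth_add[OF uSM wS])
    define v where "v = (\<lambda>y. lam t * z y)"
    have lp: "lam t > 0" unfolding lam_def using cp by simp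
    have vS: "v \<in> smooth_sphere" unfolding v_def by (rule smooth_scale[OF zS])
    have I: "sphere_int (\<lambda>y. \<bar>z y\<bar> powr p) = c t * omega TYPE('n)"
      unfolding c_def z_def w_def using om by simp
    have "sphere_int (\<lambda>y. \<bar>v y\<bar> powr p) = sphere_int (\<lambda>y. lam t powr p * \<bar>z y\<bar> powr p)"
      unfolding v_def using lp by (simp add: abs_mult powr_mult)
    also have "\<dots> = lam t powr p * (c t * omega TYPE('n))" by (simp add: sint_cmult I)
    also have "lam t powr p = inverse (c t)"
    proof -
      have "lam t powr p = c t powr (- 1 / p * p)" unfolding lam_def by (rule powr_powr)
      also have "- 1 / p * p = - 1" using ppos by simp
      also have "c t powr (- 1) = inverse (c t)" using cp by (simp add: powr_minus)
      finally show ?thesis .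
    qed
    finally have "sphere_int (\<lambda>y. \<bar>v y\<bar> powr p) = omega TYPE('n)" using cp by simp
    then have vV: "v \<in> constraint_set p" using vS unfolding constraint_set_def by simp
    have vc: "cm_close m0 \<epsilon> u v"
      unfolding cm_close_def
    proof (intro allI impI ballI)
      fix "is" :: "'n list" and x :: "real^'n" assume l: "length is \<le> m0" and x: "x \<in> sphere 0 1"
      have re: "radial_ext (\<lambda>y. v y - u y) = (\<lambda>x. (lam t - 1) * radial_ext u x + (lam t * t) * radial_ext w x)"
        unfolding v_def z_def radial_ext_def by (simp add: fun_eq_iff algebra_simps)
      have "x \<noteq> 0" using x by auto
      then have "iter_pd is (radial_ext (\<lambda>y. v y - u y)) x
          = (lam t - 1) * iter_pd is (radial_ext u) x + (lam t * t) * iter_pd is (radial_ext w) x"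
        unfolding re by (rule iter_pd_lin[OF Cu Cw])
      also have "\<bar>\<dots>\<bar> \<le> \<bar>lam t - 1\<bar> * Mu + \<bar>lam t * t\<bar> * Mw"
        using Mu(2)[OF l x] Mw(2)[OF l x]
        by (intro order_trans[OF abs_triangle_ineq] add_mono) (auto simp: abs_mult intro!: mult_left_mono)
      also have "\<dots> \<le> (\<bar>lam t - 1\<bar> + \<bar>lam t * t\<bar>) * M"
        unfolding M_def using Mu Mw by (simp add: algebra_simps add_mono mult_left_mono)
      also have "\<dots> \<le> (\<bar>lam t - 1\<bar> + \<bar>lam t * t\<bar>) * (M + 1)" by (simp add: mult_left_mono)
      also have "\<dots> < \<epsilon> / (M + 1) * (M + 1)"
        using small Mu Mw unfolding M_def by (intro mult_strict_right_mono) auto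
      also have "\<dots> = \<epsilon>" using Mu Mw unfolding M_def by simp
      finally show "\<bar>iter_pd is (radial_ext (\<lambda>y. v y - u y)) x\<bar> < \<epsilon>" .
    qed
    have Ev: "energy j L v \<ge> energy j L u" by (rule mn[OF vV vc])
    have "energy j L v = lam t ^ (j + 1) * energy j L z"
      unfolding energy_sa v_def using scale_rep[OF zS, of "[]" "j + 1" "lam t"] by simp
    also have "lam t ^ (j + 1) = c t powr (- ((j + 1) / p))"
    proof -
      have "lam t ^ (j + 1) = lam t powr real (j + 1)" using powr_realpow[OF lp, of "j + 1"] by simp
      also have "\<dots> = c t powr (- ((j + 1) / p))" unfolding lam_def by (simp add: powr_powr)
      finally show ?thesis .
    qed
    finally have "c t powr (- ((j + 1) / p)) * energy j L z \<ge> energy j L u" using Ev by simp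
    then have "c t powr ((j + 1) / p) * (c t powr (- ((j + 1) / p)) * energy j L z) \<ge> c t powr ((j + 1) / p) * energy j L u"
      by (rule mult_left_mono) simp
    moreover have "c t powr ((j + 1) / p) * c t powr (- ((j + 1) / p)) = 1"
      using cp by (simp add: powr_add[symmetric])
    ultimately show "energy j L (\<lambda>y. u y + t * w y) \<ge> c t powr ((j + 1) / p) * energy j L u"
      unfolding z_def by (simp add: mult.assoc[symmetric])
  qed
qed

lemma key:
  fixes i :: 'n
  shows "real ((j + 1) choose 2) * sa_form L ((\<lambda>y. y $ i * u y) # (\<lambda>y. y $ i * u y) # replicate (j - 1) u)
    \<ge> energy j L u * ((j + 1) / p) * (p * (p - 1) / 2 * sphere_int (\<lambda>y. (y $ i)^2 * u y powr p) / omega TYPE('n))"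
proof -
  define w where "w = (\<lambda>y. y $ i * u y)"
  define \<omega> where "\<omega> = omega TYPE('n)"
  have om: "\<omega> > 0" unfolding \<omega>_def by (rule omega_pos)
  define J where "J = sphere_int (\<lambda>y. (y $ i)^2 * u y powr p)"
  define A where "A = p * (p - 1) / 2 * J / \<omega>"
  define c where "c = (\<lambda>t. sphere_int (\<lambda>y. \<bar>u y + t * (y $ i * u y)\<bar> powr p) / omega TYPE('n))"
  define q where "q = (j + 1) / p"
  define E0 where "E0 = energy j L u"
  define G1 where "G1 = sa_form L (w # replicate j u)"
  define G2 where "G2 = sa_form L (w # w # replicate (j - 1) u)"
  define C2 where "C2 = real ((j + 1) choose 2)"
  obtain K1 where K1: "\<And>t. \<bar>t\<bar> \<le> 1/2 \<Longrightarrow> \<bar>sphere_int (\<lambda>y. \<bar>u y + t * (y $ i * u y)\<bar> powr p) - omega TYPE('n)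
      - p * (p - 1) / 2 * t^2 * sphere_int (\<lambda>y. (y $ i)^2 * u y powr p)\<bar> \<le> K1 * \<bar>t\<bar>^3"
    using c_taylor[of i] by blast
  define K1' where "K1' = K1 / \<omega>"
  have ct: "\<bar>c t - 1 - A * t^2\<bar> \<le> K1' * \<bar>t\<bar>^3" if t: "\<bar>t\<bar> \<le> 1/2" for t
  proof -
    have "c t - 1 - A * t^2 = (sphere_int (\<lambda>y. \<bar>u y + t * (y $ i * u y)\<bar> powr p) - omega TYPE('n)
      - p * (p - 1) / 2 * t^2 * sphere_int (\<lambda>y. (y $ i)^2 * u y powr p)) / \<omega>"
      unfolding c_def A_def J_def \<omega>_def using om[unfolded \<omega>_def] by (simp add: field_simps)
    then have "\<bar>c t - 1 - A * t^2\<bar> \<le> K1 * \<bar>t\<bar>^3 / \<omega>"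
      using K1[OF t] om by (simp add: divide_right_mono)
    then show ?thesis unfolding K1'_def by simp
  qed
  obtain K2 where K2: "\<And>t. \<bar>t\<bar> \<le> 1 \<Longrightarrow> \<bar>energy j L (\<lambda>y. u y + t * w y) - (E0 + real (j + 1) * t * G1 + C2 * t^2 * G2)\<bar> \<le> K2 * \<bar>t\<bar>^3"
    using Ez_taylor[of i] unfolding w_def E0_def G1_def G2_def C2_def by blast
  obtain Kq where Kq: "\<And>s. \<bar>s\<bar> \<le> 1/2 \<Longrightarrow> \<bar>(1 + s) powr q - 1 - q * s - q * (q - 1) / 2 * s^2\<bar> \<le> Kq * \<bar>s\<bar>^3"
    using taylor3[of q] by blast
  have Kq0: "Kq \<ge> 0"
  proof -
    have "0 \<le> Kq * \<bar>1/2::real\<bar>^3" using Kq[of "1/2"] abs_ge_zero order_trans by simp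
    then show ?thesis by (simp add: zero_le_mult_iff)
  qed
  have ev: "eventually (\<lambda>t. energy j L (\<lambda>y. u y + t * w y) \<ge> c t powr q * E0) (at 0)"
    using locmin[of i A K1'] ct unfolding w_def c_def q_def E0_def by blast
  obtain d where d: "d > 0" "\<And>t. t \<noteq> 0 \<Longrightarrow> dist t 0 < d \<Longrightarrow> energy j L (\<lambda>y. u y + t * w y) \<ge> c t powr q * E0"
    using ev unfolding eventually_at by auto
  define B where "B = \<bar>A\<bar> + \<bar>K1'\<bar>"
  define K3 where "K3 = \<bar>q\<bar> * \<bar>K1'\<bar> + \<bar>q * (q - 1) / 2\<bar> * B^2 + Kq * B^3"
  define \<delta> where "\<delta> = min d (min (1/2) (1 / (2 * (B + 1))))"
  have B0: "B \<ge> 0" unfolding B_def by simp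
  have \<delta>0: "\<delta> > 0" unfolding \<delta>_def using d(1) B0 by simp
  have main: "real (j + 1) * G1 * t + (C2 * G2 - E0 * q * A) * t^2 \<ge> - (K2 + \<bar>E0\<bar> * K3) * \<bar>t\<bar>^3"
    if t: "\<bar>t\<bar> < \<delta>" for t
  proof (cases "t = 0")
    case True
    then show ?thesis by simp
  next
    case False
    have th: "\<bar>t\<bar> \<le> 1/2" using t unfolding \<delta>_def by simp
    have t1: "\<bar>t\<bar> \<le> 1" using th by simp
    have tB: "\<bar>t\<bar> \<le> 1 / (2 * (B + 1))" using t unfolding \<delta>_def by simp
    have Et: "energy j L (\<lambda>y. u y + t * w y) \<ge> c t powr q * E0"
      using d(2)[OF False] t unfolding \<delta>_def by (simp add: dist_real_def)
    define y where "y = c t - 1"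
    define \<rho> where "\<rho> = y - A * t^2"
    have \<rho>: "\<bar>\<rho>\<bar> \<le> K1' * \<bar>t\<bar>^3" using ct[OF th] unfolding \<rho>_def y_def by simp
    have t32: "\<bar>t\<bar>^3 \<le> \<bar>t\<bar>^2" using t1 by (intro power_decreasing) auto
    have yB: "\<bar>y\<bar> \<le> B * t^2"
    proof -
      have r1: "\<bar>y\<bar> \<le> \<bar>A * t^2\<bar> + \<bar>\<rho>\<bar>" unfolding \<rho>_def using abs_triangle_ineq[of "A*t^2" "y - A*t^2"] by simp
      have r2: "\<bar>A * t^2\<bar> = \<bar>A\<bar> * t^2" by (simp add: abs_mult)
      have r3: "\<bar>\<rho>\<bar> \<le> \<bar>K1'\<bar> * \<bar>t\<bar>^2"
      proof -
        have "K1' * \<bar>t\<bar>^3 \<le> \<bar>K1'\<bar> * \<bar>t\<bar>^3" by (rule mult_right_mono) auto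
        also have "\<dots> \<le> \<bar>K1'\<bar> * \<bar>t\<bar>^2" by (rule mult_left_mono[OF t32]) simp
        finally show ?thesis using \<rho> by linarith
      qed
      have "\<bar>y\<bar> \<le> \<bar>A\<bar> * t^2 + \<bar>K1'\<bar> * \<bar>t\<bar>^2" using r1 r2 r3 by linarith
      then show ?thesis unfolding B_def power2_abs by (simp add: distrib_right)
    qed
    have By: "B * t^2 \<le> 1/2"
    proof -
      have "t^2 = \<bar>t\<bar> * \<bar>t\<bar>" by (simp add: power2_eq_square abs_mult_self_eq)
      also have "\<dots> \<le> \<bar>t\<bar> * 1" by (rule mult_left_mono[OF t1]) simp
      finally have "t^2 \<le> \<bar>t\<bar>" by simp
      then have "B * t^2 \<le> B * \<bar>t\<bar>" using B0 by (rule mult_left_mono)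
      also have "\<dots> \<le> B * (1 / (2 * (B + 1)))" using tB B0 by (rule mult_left_mono)
      also have "\<dots> \<le> 1/2" using B0 by (simp add: field_simps)
      finally show ?thesis .
    qed
    have yh: "\<bar>y\<bar> \<le> 1/2" using yB By by linarith
    have cq: "c t powr q = (1 + y) powr q" unfolding y_def by simp
    define \<theta> where "\<theta> = (1 + y) powr q - 1 - q * y - q * (q - 1) / 2 * y^2"
    have \<theta>: "\<bar>\<theta>\<bar> \<le> Kq * \<bar>y\<bar>^3" unfolding \<theta>_def by (rule Kq[OF yh])
    have t43: "\<bar>t\<bar>^4 \<le> \<bar>t\<bar>^3" "\<bar>t\<bar>^6 \<le> \<bar>t\<bar>^3" using t1 by (intro power_decreasing; simp)+
    have y2: "y^2 \<le> B^2 * \<bar>t\<bar>^3"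
    proof -
      have "y^2 = \<bar>y\<bar>^2" by simp
      also have "\<dots> \<le> (B * t^2)^2" by (rule power_mono[OF yB]) simp
      also have "\<dots> = B^2 * \<bar>t\<bar>^4" by (simp add: power_mult_distrib power2_abs flip: power_mult)
      also have "\<dots> \<le> B^2 * \<bar>t\<bar>^3" by (rule mult_left_mono[OF t43(1)]) simp
      finally show ?thesis .
    qed
    have y3: "\<bar>y\<bar>^3 \<le> B^3 * \<bar>t\<bar>^3"
    proof -
      have "\<bar>y\<bar>^3 \<le> (B * t^2)^3" by (rule power_mono[OF yB]) simp
      also have "\<dots> = B^3 * \<bar>t\<bar>^6" by (simp add: power_mult_distrib power2_abs flip: power_mult)
      also have "\<dots> \<le> B^3 * \<bar>t\<bar>^3" by (rule mult_left_mono[OF t43(2)]) (use B0 in simp)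
      finally show ?thesis .
    qed
    define R3 where "R3 = c t powr q - 1 - q * A * t^2"
    have R3e: "R3 = q * \<rho> + q * (q - 1) / 2 * y^2 + \<theta>"
      unfolding R3_def cq \<theta>_def \<rho>_def by (simp add: algebra_simps)
    have R3b: "\<bar>R3\<bar> \<le> K3 * \<bar>t\<bar>^3"
    proof -
      have a1: "\<bar>q * \<rho>\<bar> \<le> \<bar>q\<bar> * \<bar>K1'\<bar> * \<bar>t\<bar>^3"
      proof -
        have "\<bar>q * \<rho>\<bar> = \<bar>q\<bar> * \<bar>\<rho>\<bar>" by (simp add: abs_mult)
        also have "\<dots> \<le> \<bar>q\<bar> * (K1' * \<bar>t\<bar>^3)" by (rule mult_left_mono[OF \<rho>]) simp
        also have "\<dots> \<le> \<bar>q\<bar> * (\<bar>K1'\<bar> * \<bar>t\<bar>^3)" by (intro mult_left_mono mult_right_mono) auto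
        finally show ?thesis by (simp add: mult.assoc)
      qed
      have a2: "\<bar>q * (q - 1) / 2 * y^2\<bar> \<le> \<bar>q * (q - 1) / 2\<bar> * B^2 * \<bar>t\<bar>^3"
      proof -
        have "\<bar>q * (q - 1) / 2 * y^2\<bar> = \<bar>q * (q - 1) / 2\<bar> * y^2" by (simp add: abs_mult)
        also have "\<dots> \<le> \<bar>q * (q - 1) / 2\<bar> * (B^2 * \<bar>t\<bar>^3)" by (rule mult_left_mono[OF y2]) simp
        finally show ?thesis by (simp add: mult.assoc)
      qed
      have a3: "\<bar>\<theta>\<bar> \<le> Kq * B^3 * \<bar>t\<bar>^3"
        using order_trans[OF \<theta> mult_left_mono[OF y3 Kq0]] by (simp add: mult.assoc)
      have "\<bar>q * \<rho> + q * (q - 1) / 2 * y^2 + \<theta>\<bar> \<le> \<bar>q * \<rho>\<bar> + \<bar>q * (q - 1) / 2 * y^2\<bar> + \<bar>\<theta>\<bar>"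
        using abs_triangle_ineq[of "q * \<rho> + q * (q - 1) / 2 * y^2" \<theta>] abs_triangle_ineq[of "q * \<rho>" "q * (q - 1) / 2 * y^2"]
        by linarith
      also have "\<dots> \<le> \<bar>q\<bar> * \<bar>K1'\<bar> * \<bar>t\<bar>^3 + \<bar>q * (q - 1) / 2\<bar> * B^2 * \<bar>t\<bar>^3 + Kq * B^3 * \<bar>t\<bar>^3"
        using a1 a2 a3 by linarith
      also have "\<dots> = K3 * \<bar>t\<bar>^3" unfolding K3_def by (simp add: algebra_simps)
      finally show ?thesis unfolding R3e .
    qed
    define R2 where "R2 = energy j L (\<lambda>y. u y + t * w y) - (E0 + real (j + 1) * t * G1 + C2 * t^2 * G2)"
    have R2b: "\<bar>R2\<bar> \<le> K2 * \<bar>t\<bar>^3" unfolding R2_def by (rule K2[OF t1])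
    have ER3: "\<bar>E0 * R3\<bar> \<le> \<bar>E0\<bar> * K3 * \<bar>t\<bar>^3"
      using R3b by (simp add: abs_mult mult.assoc mult_left_mono)
    have e1: "real (j + 1) * G1 * t + (C2 * G2 - E0 * q * A) * t^2 = energy j L (\<lambda>y. u y + t * w y) - E0 - R2 - E0 * q * A * t^2"
      unfolding R2_def by (simp add: algebra_simps)
    have e2: "c t powr q * E0 = E0 + E0 * q * A * t^2 + E0 * R3" unfolding R3_def by (simp add: algebra_simps)
    have e3: "- (\<bar>E0\<bar> * K3 * \<bar>t\<bar>^3) \<le> E0 * R3" using ER3 by (simp add: abs_le_iff)
    have e4: "R2 \<le> K2 * \<bar>t\<bar>^3" using R2b by (simp add: abs_le_iff)
    have e5: "(K2 + \<bar>E0\<bar> * K3) * \<bar>t\<bar>^3 = K2 * \<bar>t\<bar>^3 + \<bar>E0\<bar> * K3 * \<bar>t\<bar>^3" by (simp add: algebra_simps)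
    show ?thesis using e1 e2 e3 e4 e5 Et by linarith
  qed
  have "C2 * G2 - E0 * q * A \<ge> 0" by (rule quad_nonneg[OF \<delta>0 main])
  then show ?thesis unfolding C2_def G2_def E0_def q_def A_def J_def \<omega>_def w_def by (simp add: mult.assoc)
qed

end


lemma sum_sq_sphere: "(y::real^'n) \<in> sphere 0 1 \<Longrightarrow> (\<Sum>i\<in>UNIV. (y $ i)^2) = 1"
proof -
  assume "y \<in> sphere 0 1"
  then have "norm y = 1" by simp
  then have "y \<bullet> y = 1" by (metis norm_eq_sqrt_inner real_sqrt_eq_1_iff)
  then show ?thesis by (simp add: inner_vec_def power2_eq_square)
qed

theorem proposition4p1:
  fixes L :: "(real^'n \<Rightarrow> real) list \<Rightarrow> real^'n \<Rightarrow> real"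
    and n k j :: nat and p :: real and u :: "real^'n \<Rightarrow> real"
  assumes "n = CARD('n) - 1"
    and "k > 0" and "j > 0" and "n > 2 * k"
    and "formally_self_adjoint j L"
    and "p = real (n * (j + 1)) / real (n - 2 * k)"
    and "u \<in> constraint_set p"
    and "\<forall>x\<in>sphere 0 1. u x > 0"
    and "local_minimizer (energy j L) (constraint_set p) u"
    and "\<forall>i. sphere_int (\<lambda>x. x $ i * u x powr p) = 0"
  shows "(\<Sum>i\<in>UNIV. sphere_int (\<lambda>x. x $ i * u x *
            (L ((\<lambda>y. y $ i * u y) # replicate (j - 1) u) x - x $ i * L (replicate j u) x)))
         \<ge> 2 * real (j + 1) * real k / (real j * real (n - 2 * k)) * energy j L u"
proof -
  have nk: "real (n - 2 * k) = real n - 2 * real k" using assms(4) by (simp add: of_nat_diff)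
  have nk0: "real n - 2 * real k > 0" using assms(4) by simp
  have pe: "p = real n * (real j + 1) / (real n - 2 * real k)" using assms(6) nk by (simp add: algebra_simps)
  have ppos: "p > 0" unfolding pe using nk0 assms(4) by (intro divide_pos_pos mult_pos_pos) auto
  have uSM: "u \<in> smooth_sphere" and cons: "sphere_int (\<lambda>x. \<bar>u x\<bar> powr p) = omega TYPE('n)"
    using assms(7) unfolding constraint_set_def by auto
  interpret main j L p u
    by unfold_locales (use assms uSM cons ppos in auto)
  define \<omega> where "\<omega> = omega TYPE('n)"
  have om: "\<omega> > 0" unfolding \<omega>_def by (rule omega_pos)
  define E0 where "E0 = energy j L u"
  define w where "w i = (\<lambda>y. y $ i * u y)" for i :: 'n
  define G2 where "G2 i = sa_form L (w i # w i # replicate (j - 1) u)" for i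
  define J where "J i = sphere_int (\<lambda>y. (y $ i)^2 * u y powr p)" for i :: 'n
  have jr: "real j > 0" using assms(3) by simp
  have keyi: "real j * G2 i \<ge> E0 * (p - 1) * J i / \<omega>" for i
  proof -
    have h1: "real ((j + 1) choose 2) * G2 i \<ge> E0 * ((j + 1) / p) * (p * (p - 1) / 2 * J i / \<omega>)"
      using key[of i] unfolding G2_def w_def E0_def J_def \<omega>_def by simp
    have h2: "real ((j + 1) choose 2) = (real j + 1) * real j / 2"
    proof -
      have ev: "even ((j + 1) * j)" by simp
      have "2 * ((j + 1) choose 2) = (j + 1) * j"
        unfolding choose_two using ev by simp
      then have "2 * real ((j + 1) choose 2) = (real j + 1) * real j"
        by (metis of_nat_1 of_nat_add of_nat_mult of_nat_numeral)
      then show ?thesis by simp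
    qed
    have h3: "E0 * ((j + 1) / p) * (p * (p - 1) / 2 * J i / \<omega>) = (real j + 1) / 2 * (E0 * (p - 1) * J i / \<omega>)"
      using ppos om by (simp add: field_simps)
    have h4: "(real j + 1) / 2 * (real j * G2 i) = real ((j + 1) choose 2) * G2 i"
      unfolding h2 by (simp add: algebra_simps)
    have "(real j + 1) / 2 * (real j * G2 i) \<ge> (real j + 1) / 2 * (E0 * (p - 1) * J i / \<omega>)"
      using h1 h3 h4 by linarith
    then show ?thesis by (rule mult_left_le_imp_le) simp
  qed
  have cw: "continuous_on (sphere 0 1) (\<lambda>y. (y $ i)^2 * u y powr p)" for i :: 'n
    by (intro continuous_intros upC)
  have sumJ: "(\<Sum>i\<in>UNIV. J i) = \<omega>"
  proof -
    have "(\<Sum>i\<in>UNIV. J i) = sphere_int (\<lambda>y. \<Sum>i\<in>UNIV. (y $ i)^2 * u y powr p)"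
      unfolding J_def by (rule sint_sum[symmetric]) (auto intro: cw)
    also have "\<dots> = sphere_int (\<lambda>y. \<bar>u y\<bar> powr p)"
    proof (rule sint_cong)
      show "\<forall>x\<in>sphere 0 1. (\<Sum>i\<in>UNIV. (x $ i)^2 * u x powr p) = \<bar>u x\<bar> powr p"
      proof
        fix x :: "real^'n" assume x: "x \<in> sphere 0 1"
        have "(\<Sum>i\<in>UNIV. (x $ i)^2 * u x powr p) = (\<Sum>i\<in>UNIV. (x $ i)^2) * u x powr p"
          by (simp add: sum_distrib_right)
        also have "\<dots> = u x powr p" using sum_sq_sphere[OF x] by simp
        also have "u x powr p = \<bar>u x\<bar> powr p" using upos x by (simp add: less_imp_le)
        finally show "(\<Sum>i\<in>UNIV. (x $ i)^2 * u x powr p) = \<bar>u x\<bar> powr p" .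
      qed
      show "(\<Sum>i\<in>UNIV. (0 $ i)^2 * u 0 powr p) = \<bar>u 0\<bar> powr p" by (simp add: u0)
    qed
    finally show ?thesis using cons unfolding \<omega>_def by simp
  qed
  have sumG: "real j * (\<Sum>i\<in>UNIV. G2 i) \<ge> E0 * (p - 1)"
  proof -
    have "real j * (\<Sum>i\<in>UNIV. G2 i) = (\<Sum>i\<in>UNIV. real j * G2 i)" by (simp add: sum_distrib_left)
    also have "\<dots> \<ge> (\<Sum>i\<in>UNIV. E0 * (p - 1) * J i / \<omega>)" by (rule sum_mono[OF keyi])
    also have "(\<Sum>i\<in>UNIV. E0 * (p - 1) * J i / \<omega>) = E0 * (p - 1) * (\<Sum>i\<in>UNIV. J i) / \<omega>"
      by (simp add: sum_distrib_left sum_divide_distrib)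
    also have "\<dots> = E0 * (p - 1)" unfolding sumJ using om by simp
    finally show ?thesis .
  qed
  have Ls: "L (w i # replicate (j - 1) u) \<in> smooth_sphere" for i
    by (rule Lout) (use assms(3) uSM wSM in \<open>auto simp: w_def\<close>)
  have Lu: "L (replicate j u) \<in> smooth_sphere" by (rule Lout) (use uSM in auto)
  have cLs: "continuous_on (sphere 0 1) (L (w i # replicate (j - 1) u))" for i by (rule smooth_cont[OF Ls])
  have cLu: "continuous_on (sphere 0 1) (L (replicate j u))" by (rule smooth_cont[OF Lu])
  have trm: "sphere_int (\<lambda>x. x $ i * u x * (L ((\<lambda>y. y $ i * u y) # replicate (j - 1) u) x - x $ i * L (replicate j u) x))
     = G2 i - sphere_int (\<lambda>x. (x $ i)^2 * (u x * L (replicate j u) x))" for i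
  proof -
    have "sphere_int (\<lambda>x. x $ i * u x * (L ((\<lambda>y. y $ i * u y) # replicate (j - 1) u) x - x $ i * L (replicate j u) x))
      = sphere_int (\<lambda>x. w i x * L (w i # replicate (j - 1) u) x - (x $ i)^2 * (u x * L (replicate j u) x))"
      unfolding w_def by (simp add: algebra_simps power2_eq_square)
    also have "\<dots> = sphere_int (\<lambda>x. w i x * L (w i # replicate (j - 1) u) x) - sphere_int (\<lambda>x. (x $ i)^2 * (u x * L (replicate j u) x))"
      unfolding w_def by (rule sint_diff) (intro continuous_intros uC cLs[unfolded w_def] cLu)+
    also have "sphere_int (\<lambda>x. w i x * L (w i # replicate (j - 1) u) x) = G2 i"
      unfolding G2_def sa_form_def by simp
    finally show ?thesis .
  qed
  have sumE: "(\<Sum>i\<in>UNIV. sphere_int (\<lambda>x. (x $ i)^2 * (u x * L (replicate j u) x))) = E0"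
  proof -
    have "(\<Sum>i\<in>UNIV. sphere_int (\<lambda>x. (x $ i)^2 * (u x * L (replicate j u) x)))
        = sphere_int (\<lambda>x. \<Sum>i\<in>UNIV. (x $ i)^2 * (u x * L (replicate j u) x))"
      by (rule sint_sum[symmetric]) (auto intro!: continuous_intros uC cLu)
    also have "\<dots> = sphere_int (\<lambda>x. u x * L (replicate j u) x)"
    proof (rule sint_cong)
      show "\<forall>x\<in>sphere 0 1. (\<Sum>i\<in>UNIV. (x $ i)^2 * (u x * L (replicate j u) x)) = u x * L (replicate j u) x"
      proof
        fix x :: "real^'n" assume x: "x \<in> sphere 0 1"
        have "(\<Sum>i\<in>UNIV. (x $ i)^2 * (u x * L (replicate j u) x)) = (\<Sum>i\<in>UNIV. (x $ i)^2) * (u x * L (replicate j u) x)"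
          by (simp add: sum_distrib_right)
        also have "\<dots> = u x * L (replicate j u) x" using sum_sq_sphere[OF x] by simp
        finally show "(\<Sum>i\<in>UNIV. (x $ i)^2 * (u x * L (replicate j u) x)) = u x * L (replicate j u) x" .
      qed
      show "(\<Sum>i\<in>UNIV. (0 $ i)^2 * (u 0 * L (replicate j u) 0)) = u 0 * L (replicate j u) 0" by (simp add: u0)
    qed
    finally show ?thesis unfolding E0_def energy_def .
  qed
  have lhs: "(\<Sum>i\<in>UNIV. sphere_int (\<lambda>x. x $ i * u x *
            (L ((\<lambda>y. y $ i * u y) # replicate (j - 1) u) x - x $ i * L (replicate j u) x)))
      = (\<Sum>i\<in>UNIV. G2 i) - E0"
    unfolding trm sum_subtractf sumE ..
  have coef: "2 * real (j + 1) * real k / (real j * real (n - 2 * k)) = (p - 1 - real j) / real j"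
    unfolding pe nk using nk0 jr by (simp add: field_simps)
  have "(p - 1 - real j) / real j * E0 \<le> (\<Sum>i\<in>UNIV. G2 i) - E0"
  proof -
    have "(p - 1 - real j) / real j * E0 = (E0 * (p - 1)) / real j - E0" using jr by (simp add: field_simps)
    also have "\<dots> \<le> (real j * (\<Sum>i\<in>UNIV. G2 i)) / real j - E0"
      using divide_right_mono[OF sumG, of "real j"] jr by simp
    also have "\<dots> = (\<Sum>i\<in>UNIV. G2 i) - E0" using jr by simp
    finally show ?thesis .
  qed
  then show ?thesis unfolding lhs coef E0_def .
qed


end
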